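(* Write $\chi_n^*(M_{1,2}(F))=\sum m_{\langle\lambda\rangle}\chi_{\langle\lambda\rangle}$, the sum over multipartitions $\langle\lambda\rangle=(\lambda(1),\lambda(2),\lambda(3),\lambda(4))\vdash n$ with $h(\lambda(1))\le2$, $h(\lambda(2))\le3$, $h(\lambda(3))\le2$, $h(\lambda(4))\le2$. Let $\langle\lambda\rangle=(\lambda(1),\lambda(2),\lambda(3),\emptyset)$ with $\lambda(1)=(\alpha_1+\alpha_2,\alpha_2)$, $\lambda(2)=(\gamma_1+\gamma_2+\gamma_3,\gamma_2+\gamma_3,\gamma_3)\neq\emptyset$, $\lambda(3)=(w_1+w_2,w_2)\neq\emptyset$ (all $\alpha_i,\gamma_i,w_i\ge0$ integers). If either $w_1\le2$, or $w_1\ge3$ and $\gamma_1+\gamma_2\ge\lceil w_1/2\rceil-1$, then $m_{\langle\lambda\rangle}\neq0$.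
   Context: $F$ is a field of characteristic zero. $M_{1,2}(F)$ is $M_3(F)$ with $\mathbb{Z}_2$-grading with even part spanned by $e_{11},e_{22},e_{23},e_{32},e_{33}$, odd part by $e_{12},e_{13},e_{21},e_{31}$, and orthosymplectic superinvolution $*$ sending the matrix with rows $(a,b,c),(d,e,f),(g,h,i)$ to the matrix with rows $(a,-g,d),(c,i,-f),(-b,-h,e)$. Its even symmetric, even skew, odd symmetric, odd skew parts are $\mathrm{span}\{e_{11},e_{22}+e_{33}\}$, $\mathrm{span}\{e_{22}-e_{33},e_{23},e_{32}\}$, $\mathrm{span}\{e_{12}-e_{31},e_{13}+e_{21}\}$, $\mathrm{span}\{e_{12}+e_{31},e_{13}-e_{21}\}$. In the free $*$-superalgebra on variables $y_i^+,y_i^-,z_i^+,z_i^-$ (even symmetric, even skew, odd symmetric, odd skew), a $*$-identity is a polynomial vanishing under all substitutions of the variables by elements of the corresponding parts; $Id_2^*$ denotes the set of them. $P_n^*$ is the span of the monomials $w_{\sigma(1)}\cdots w_{\sigma(n)}$, $\sigma\in S_n$, $w_i\in\{y_i^+,y_i^-,z_i^+,z_i^-\}$. The group $\mathbb{H}_n=(\mathbb{Z}_2\times\mathbb{Z}_2)\wr S_n$, with $\mathbb{Z}_2\times\mathbb{Z}_2=\{1,*,\zeta,*\zeta\}$, acts on $P_n^*$: $h=(a_1,\dots,a_n;\sigma)$ sends $y_i^+\mapsto y_{\sigma(i)}^+$, $y_i^-\mapsto \pm y_{\sigma(i)}^-$ (sign $+$ iff $a_{\sigma(i)}\in\{1,\zeta\}$),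 $z_i^+\mapsto\pm z_{\sigma(i)}^+$ ($+$ iff $a_{\sigma(i)}\in\{1,*\}$), $z_i^-\mapsto\pm z_{\sigma(i)}^-$ ($+$ iff $a_{\sigma(i)}\in\{1,*\zeta\}$). The character of $P_n^*/(P_n^*\cap Id_2^*(M_{1,2}(F)))$ is the $n$-th $*$-cocharacter $\chi_n^*(M_{1,2}(F))$. Irreducible $\mathbb{H}_n$-characters $\chi_{\langle\lambda\rangle}$ correspond to multipartitions $\langle\lambda\rangle=(\lambda(1),\dots,\lambda(4))$, $\lambda(i)\vdash n_i$, $\sum n_i=n$, with $\lambda(1),\dots,\lambda(4)$ corresponding to the variable types $y^+,y^-,z^+,z^-$; equivalently $m_{\langle\lambda\rangle}$ is the multiplicity of $\chi_{\lambda(1)}\otimes\cdots\otimes\chi_{\lambda(4)}$ in the $S_{n_1}\times\cdots\times S_{n_4}$-character of the multilinear polynomials with $n_1,\dots,n_4$ variables of the four types modulo identities. $h(\mu)$ is the height of a partition $\mu$; $\emptyset$ is the empty partition; $\lceil c\rceil$ is the least integer $\ge c$. *)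

theory Defs
  imports Complex_Main "HOL-Combinatorics.Permutations" "HOL-Library.Function_Algebras"
begin

text \<open>3x3 matrices over F, indices 0,1,2 (entries outside are required to be 0).\<close>
type_synonym 'a mat3 = "nat \<Rightarrow> nat \<Rightarrow> 'a"

definition in3 :: "'a::zero mat3 \<Rightarrow> bool" where
  "in3 A \<longleftrightarrow> (\<forall>i j. (3 \<le> i \<or> 3 \<le> j) \<longrightarrow> A i j = 0)"

definition mmul :: "'a::comm_ring_1 mat3 \<Rightarrow> 'a mat3 \<Rightarrow> 'a mat3" where
  "mmul A B = (\<lambda>i j. \<Sum>k<3. A i k * B k j)"

definition mone :: "'a::comm_ring_1 mat3" where
  "mone = (\<lambda>i j. if i = j \<and> i < 3 then 1 else 0)"

definition mzero :: "'a::comm_ring_1 mat3" where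
  "mzero = (\<lambda>i j. 0)"

definition msmult :: "'a::comm_ring_1 \<Rightarrow> 'a mat3 \<Rightarrow> 'a mat3" where
  "msmult c A = (\<lambda>i j. c * A i j)"

definition madd :: "'a::comm_ring_1 mat3 \<Rightarrow> 'a mat3 \<Rightarrow> 'a mat3" where
  "madd A B = (\<lambda>i j. A i j + B i j)"

definition mneg :: "'a::comm_ring_1 mat3 \<Rightarrow> 'a mat3" where
  "mneg A = (\<lambda>i j. - A i j)"

text \<open>Orthosymplectic superinvolution: rows (a,b,c),(d,e,f),(g,h,i) go to
  rows (a,-g,d),(c,i,-f),(-b,-h,e).\<close>
definition mstar :: "'a::comm_ring_1 mat3 \<Rightarrow> 'a mat3" where
  "mstar A = (\<lambda>i j.
     if (i,j) = (0,0) then A 0 0 else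
     if (i,j) = (0,1) then - A 2 0 else
     if (i,j) = (0,2) then A 1 0 else
     if (i,j) = (1,0) then A 0 2 else
     if (i,j) = (1,1) then A 2 2 else
     if (i,j) = (1,2) then - A 1 2 else
     if (i,j) = (2,0) then - A 0 1 else
     if (i,j) = (2,1) then - A 2 1 else
     if (i,j) = (2,2) then A 1 1 else 0)"

text \<open>Z_2-grading: even part spanned by e11, e22, e23, e32, e33 (0-indexed: (0,0) and the
  block {1,2}x{1,2}); odd part by e12, e13, e21, e31.\<close>
definition meven :: "'a::comm_ring_1 mat3 \<Rightarrow> bool" where
  "meven A \<longleftrightarrow> in3 A \<and> (\<forall>i j. (i = 0) \<noteq> (j = 0) \<longrightarrow> A i j = 0)"

definition modd :: "'a::comm_ring_1 mat3 \<Rightarrow> bool" where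
  "modd A \<longleftrightarrow> in3 A \<and> (\<forall>i j. (i = 0) = (j = 0) \<longrightarrow> A i j = 0)"

text \<open>The four homogeneous parts, indexed 0..3 =
  even symmetric (y+), even skew (y-), odd symmetric (z+), odd skew (z-).\<close>
definition mpart :: "nat \<Rightarrow> 'a::comm_ring_1 mat3 set" where
  "mpart t = (if t = 0 then {A. meven A \<and> mstar A = A}
              else if t = 1 then {A. meven A \<and> mstar A = mneg A}
              else if t = 2 then {A. modd A \<and> mstar A = A}
              else {A. modd A \<and> mstar A = mneg A})"

text \<open>A multipartition is given as a list L = [la1, la2, la3, la4] of partitions
  (each a list of row lengths, weakly decreasing; zero rows allowed and ignored).
  The variables are 0 .. n-1 with n = n1+n2+n3+n4, n_b = |la_b|; the first n1 are of
  type y+, the next n2 of type y-, then n3 of type z+, then n4 of type z-.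
  blockof L x = (block index, local index inside the block).\<close>
fun blockof :: "nat list list \<Rightarrow> nat \<Rightarrow> nat \<times> nat" where
  "blockof [] k = (0, k)"
| "blockof (l # ls) k = (if k < sum_list l then (0, k)
     else (case blockof ls (k - sum_list l) of (b, j) \<Rightarrow> (Suc b, j)))"

definition totaln :: "nat list list \<Rightarrow> nat" where
  "totaln L = sum_list (map sum_list L)"

definition vtype :: "nat list list \<Rightarrow> nat \<Rightarrow> nat" where
  "vtype L x = fst (blockof L x)"

text \<open>Coefficient representation: a multilinear polynomial in x_0..x_{n-1} is
  sum over sigma in S_n of c sigma * x_{sigma 0} ... x_{sigma (n-1)}.\<close>
definition Pml :: "nat \<Rightarrow> ((nat \<Rightarrow> nat) \<Rightarrow> 'a::comm_ring_1) set" where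
  "Pml n = {c. \<forall>\<sigma>. c \<sigma> \<noteq> 0 \<longrightarrow> \<sigma> permutes {..<n}}"

definition monoval :: "nat \<Rightarrow> (nat \<Rightarrow> 'a::comm_ring_1 mat3) \<Rightarrow> (nat \<Rightarrow> nat) \<Rightarrow> 'a mat3" where
  "monoval n s \<sigma> = foldr (\<lambda>k acc. mmul (s (\<sigma> k)) acc) [0..<n] mone"

definition evalp :: "nat \<Rightarrow> ((nat \<Rightarrow> nat) \<Rightarrow> 'a::comm_ring_1) \<Rightarrow> (nat \<Rightarrow> 'a mat3) \<Rightarrow> 'a mat3" where
  "evalp n c s = (\<lambda>i j. \<Sum>\<sigma>\<in>{\<sigma>. \<sigma> permutes {..<n}}. c \<sigma> * monoval n s \<sigma> i j)"

definition adm :: "nat list list \<Rightarrow> (nat \<Rightarrow> 'a::comm_ring_1 mat3) \<Rightarrow> bool" where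
  "adm L s \<longleftrightarrow> (\<forall>x < totaln L. s x \<in> mpart (vtype L x))"

definition is_star_id :: "nat list list \<Rightarrow> ((nat \<Rightarrow> nat) \<Rightarrow> 'a::comm_ring_1) \<Rightarrow> bool" where
  "is_star_id L c \<longleftrightarrow> (\<forall>s. adm L s \<longrightarrow> evalp (totaln L) c s = mzero)"

text \<open>Polynomial function of c on admissible substitutions; its kernel on Pml is exactly
  Pml \<inter> Id, so the image of Pml is (S-equivariantly) P/(P \<inter> Id).\<close>
definition evf :: "nat list list \<Rightarrow> ((nat \<Rightarrow> nat) \<Rightarrow> 'a::comm_ring_1) \<Rightarrow> (nat \<Rightarrow> 'a mat3) \<Rightarrow> 'a mat3" where
  "evf L c = (\<lambda>s. if adm L s then evalp (totaln L) c s else mzero)"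

text \<open>tau . (x_{sigma 0} ... x_{sigma(n-1)}) = x_{tau(sigma 0)} ... x_{tau(sigma(n-1))}.\<close>
definition pact :: "(nat \<Rightarrow> nat) \<Rightarrow> ((nat \<Rightarrow> nat) \<Rightarrow> 'a) \<Rightarrow> ((nat \<Rightarrow> nat) \<Rightarrow> 'a)" where
  "pact \<tau> c = (\<lambda>\<sigma>. c (inv \<tau> \<circ> \<sigma>))"

fun rowcol :: "nat list \<Rightarrow> nat \<Rightarrow> nat \<times> nat" where
  "rowcol [] k = (0, k)"
| "rowcol (l # ls) k = (if k < l then (0, k)
     else (case rowcol ls (k - l) of (r, c) \<Rightarrow> (Suc r, c)))"

text \<open>Cell of variable x in the multitableau T_L: (block, (row, column)); block b is filled
  row by row with its variables in increasing order.\<close>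
definition cell :: "nat list list \<Rightarrow> nat \<Rightarrow> nat \<times> nat \<times> nat" where
  "cell L x = (case blockof L x of (b, j) \<Rightarrow> (b, rowcol (L ! b) j))"

definition rowgrp :: "nat list list \<Rightarrow> (nat \<Rightarrow> nat) set" where
  "rowgrp L = {p. p permutes {..<totaln L} \<and>
     (\<forall>x < totaln L. fst (cell L (p x)) = fst (cell L x)
                    \<and> fst (snd (cell L (p x))) = fst (snd (cell L x)))}"

definition colgrp :: "nat list list \<Rightarrow> (nat \<Rightarrow> nat) set" where
  "colgrp L = {q. q permutes {..<totaln L} \<and>
     (\<forall>x < totaln L. fst (cell L (q x)) = fst (cell L x)
                    \<and> snd (snd (cell L (q x))) = snd (snd (cell L x)))}"

text \<open>Young symmetrizer e_{T_L} = e_{T_1} e_{T_2} e_{T_3} e_{T_4}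
  = sum_{p in R, q in C} sgn(q) p q, acting on polynomials.\<close>
definition ysym :: "nat list list \<Rightarrow> ((nat \<Rightarrow> nat) \<Rightarrow> 'a::comm_ring_1) \<Rightarrow> ((nat \<Rightarrow> nat) \<Rightarrow> 'a)" where
  "ysym L c = (\<lambda>\<sigma>. \<Sum>p\<in>rowgrp L. \<Sum>q\<in>colgrp L. of_int (sign q) * pact (p \<circ> q) c \<sigma>)"

text \<open>Multiplicity m_L of chi_{la1} x ... x chi_{la4} in the
  S_{n1} x ... x S_{n4}-module M = P_{n1,..,n4}/(P_{n1,..,n4} \<inter> Id_2^*(M_{1,2}(F))):
  it equals dim_F (e_T M) for the (primitive, up to scalar) Young symmetrizer e_T.\<close>
definition scl :: "'a::comm_ring_1 \<Rightarrow> ((nat \<Rightarrow> 'a mat3) \<Rightarrow> 'a mat3) \<Rightarrow> ((nat \<Rightarrow> 'a mat3) \<Rightarrow> 'a mat3)" where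
  "scl a F = (\<lambda>s i j. a * F s i j)"

definition mult_star :: "nat list list \<Rightarrow> 'a::field itself \<Rightarrow> nat" where
  "mult_star L _ = vector_space.dim (scl :: 'a \<Rightarrow> _)
      {evf L (ysym L c) | c :: (nat \<Rightarrow> nat) \<Rightarrow> 'a. c \<in> Pml (totaln L)}"

end

theory Submission imports Defs begin

lemma sum3: "(\<Sum>k<3. f k) = f 0 + f 1 + f (2::nat)"
  by (simp add: numeral_3_eq_3 numeral_2_eq_2)

lemma mmul_assoc: "mmul (mmul A B) C = mmul A (mmul B C)"
  unfolding mmul_def by (simp add: fun_eq_iff sum3 algebra_simps)

lemma in3_mmul: "in3 A \<Longrightarrow> in3 B \<Longrightarrow> in3 (mmul A B)"
  unfolding in3_def mmul_def by auto

lemma in3_mone: "in3 mone"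
  unfolding in3_def mone_def by auto

lemma mmul_mone_left: "in3 B \<Longrightarrow> mmul mone B = B"
proof -
  assume a: "in3 B"
  have "\<And>i j. (\<Sum>k<3. (if i = k \<and> i < 3 then 1 else 0) * B k j) = B i j"
  proof -
    fix i j
    show "(\<Sum>k<3. (if i = k \<and> i < 3 then 1 else 0) * B k j) = B i j"
    proof (cases "i < 3")
      case True
      then show ?thesis by (simp add: if_distrib[of "\<lambda>x. x * _"] sum.delta cong: if_cong)
    next
      case False
      then show ?thesis using a unfolding in3_def by auto
    qed
  qed
  then show ?thesis unfolding mmul_def mone_def by (simp add: fun_eq_iff)
qed

lemma mmul_mone_right: "in3 A \<Longrightarrow> mmul A mone = A"
proof -
  assume a: "in3 A"
  have "\<And>i j. (\<Sum>k<3. A i k * (if k = j \<and> k < 3 then 1 else 0)) = A i j"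
  proof -
    fix i j
    show "(\<Sum>k<3. A i k * (if k = j \<and> k < 3 then 1 else 0)) = A i j"
    proof (cases "j < 3")
      case True
      then show ?thesis by (simp add: if_distrib[of "\<lambda>x. _ * x"] sum.delta' cong: if_cong)
    next
      case False
      then show ?thesis using a unfolding in3_def by auto
    qed
  qed
  then show ?thesis unfolding mmul_def mone_def by (simp add: fun_eq_iff)
qed

lemma mmul3: "mmul P (mmul A Q) i j = (\<Sum>k<3. \<Sum>l<3. P i k * A k l * Q l j)"
  unfolding mmul_def by (simp add: sum_distrib_left mult.assoc)

lemma mmul_sum_mid:
  "mmul P (mmul (\<lambda>i j. \<Sum>p\<in>F. c p * A p i j) Q) i j = (\<Sum>p\<in>F. c p * mmul P (mmul (A p) Q) i j)"
proof -
  have "mmul P (mmul (\<lambda>i j. \<Sum>p\<in>F. c p * A p i j) Q) i j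
      = (\<Sum>k<3. \<Sum>l<3. \<Sum>p\<in>F. c p * (P i k * A p k l * Q l j))"
    unfolding mmul3 by (simp add: sum_distrib_left sum_distrib_right mult.assoc mult.left_commute)
  also have "\<dots> = (\<Sum>k<3. \<Sum>p\<in>F. \<Sum>l<3. c p * (P i k * A p k l * Q l j))"
    by (simp only: sum.swap[of _ "{..<3}" F])
  also have "\<dots> = (\<Sum>p\<in>F. \<Sum>k<3. \<Sum>l<3. c p * (P i k * A p k l * Q l j))"
    by (rule sum.swap)
  also have "\<dots> = (\<Sum>p\<in>F. c p * mmul P (mmul (A p) Q) i j)"
    unfolding mmul3 by (simp add: sum_distrib_left)
  finally show ?thesis .
qed

section \<open>Items and alternating values\<close>

datatype 'a item = IV nat | IM "'a mat3"

fun ev :: "(nat \<Rightarrow> 'a mat3) \<Rightarrow> (nat \<Rightarrow> nat) \<Rightarrow> 'a item \<Rightarrow> 'a mat3" where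
  "ev s q (IV x) = s (q x)"
| "ev s q (IM A) = A"

definition prodi :: "(nat \<Rightarrow> 'a::comm_ring_1 mat3) \<Rightarrow> (nat \<Rightarrow> nat) \<Rightarrow> 'a item list \<Rightarrow> 'a mat3" where
  "prodi s q its = foldr (\<lambda>it acc. mmul (ev s q it) acc) its mone"

definition CG :: "(nat \<Rightarrow> 'k) \<Rightarrow> nat set \<Rightarrow> (nat \<Rightarrow> nat) set" where
  "CG col U = {q. q permutes U \<and> (\<forall>x\<in>U. col (q x) = col x)}"

definition val :: "(nat \<Rightarrow> 'k) \<Rightarrow> (nat \<Rightarrow> 'a::comm_ring_1 mat3) \<Rightarrow> nat set \<Rightarrow> 'a item list \<Rightarrow> 'a mat3" where
  "val col s U its = (\<lambda>i j. \<Sum>q\<in>CG col U. of_int (sign q) * prodi s q its i j)"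

fun substi :: "(nat \<Rightarrow> 'a mat3) \<Rightarrow> (nat \<Rightarrow> nat) \<Rightarrow> nat set \<Rightarrow> 'a item \<Rightarrow> 'a item" where
  "substi s p K (IV x) = (if x \<in> K then IM (s (p x)) else IV x)"
| "substi s p K (IM A) = IM A"

lemma permutes_restrict_in:
  assumes "q permutes U" "K \<subseteq> U" "\<forall>x\<in>U. q x \<in> K \<longleftrightarrow> x \<in> K"
  shows "(\<lambda>x. if x \<in> K then q x else x) permutes K"
proof (rule bij_imp_permutes)
  have inj: "inj_on q U" using assms(1) permutes_inj_on by blast
  have "q ` K = K"
  proof
    show "q ` K \<subseteq> K" using assms by auto
    show "K \<subseteq> q ` K"
    proof
      fix y assume y: "y \<in> K"
      then have "y \<in> U" using assms(2) by auto
      then obtain x where x: "x \<in> U" "q x = y"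
        using assms(1) permutes_image[OF assms(1)] by (metis imageE)
      then have "x \<in> K" using assms(3) y by auto
      then show "y \<in> q ` K" using x by auto
    qed
  qed
  then have "bij_betw q K K" using inj assms(2) by (simp add: bij_betw_def inj_on_subset)
  then show "bij_betw (\<lambda>x. if x \<in> K then q x else x) K K"
    by (rule bij_betw_cong[THEN iffD1, rotated]) auto
qed auto

lemma permutes_restrict_out:
  assumes "q permutes U" "K \<subseteq> U" "\<forall>x\<in>U. q x \<in> K \<longleftrightarrow> x \<in> K"
  shows "(\<lambda>x. if x \<in> K then x else q x) permutes (U - K)"
proof -
  have "U - K \<subseteq> U" by auto
  moreover have "\<forall>x\<in>U. q x \<in> U - K \<longleftrightarrow> x \<in> U - K"
    using assms permutes_in_image[OF assms(1)] by auto
  ultimately have "(\<lambda>x. if x \<in> U - K then q x else x) permutes (U - K)"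
    using permutes_restrict_in[OF assms(1)] by blast
  moreover have "(\<lambda>x. if x \<in> U - K then q x else x) = (\<lambda>x. if x \<in> K then x else q x)"
    using assms(1) by (auto simp: fun_eq_iff permutes_not_in)
  ultimately show ?thesis by simp
qed


lemma prodi_Nil[simp]: "prodi s q [] = mone"
  unfolding prodi_def by simp

lemma prodi_Cons[simp]: "prodi s q (it # its) = mmul (ev s q it) (prodi s q its)"
  unfolding prodi_def by simp

lemma ev_substi:
  assumes p: "p permutes K" and q': "q' permutes (U - K)" and KU: "K \<subseteq> U"
  shows "ev s (p \<circ> q') it = ev s q' (substi s p K it)"
proof (cases it)
  case (IV x)
  show ?thesis
  proof (cases "x \<in> K")
    case True
    then have "q' x = x" using q' permutes_not_in by fastforce
    then show ?thesis using IV True by simp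
  next
    case False
    have "q' x \<notin> K"
    proof (cases "x \<in> U")
      case True
      then have "x \<in> U - K" using False by auto
      then have "q' x \<in> U - K" using permutes_in_image[OF q'] by auto
      then show ?thesis by auto
    next
      case xU: False
      then have "q' x = x" using q' permutes_not_in by fastforce
      then show ?thesis using False by simp
    qed
    then have "p (q' x) = q' x" using p permutes_not_in by fastforce
    then show ?thesis using IV False by simp
  qed
next
  case (IM A)
  then show ?thesis by simp
qed

lemma prodi_substi:
  assumes p: "p permutes K" and q': "q' permutes (U - K)" and KU: "K \<subseteq> U"
  shows "prodi s (p \<circ> q') its = prodi s q' (map (substi s p K) its)"
proof (induction its)
  case (Cons a its)
  then show ?case using ev_substi[OF assms, of s a] by (simp add: comp_def)
qed simp

lemma val_remove:
  fixes s :: "nat \<Rightarrow> 'a::comm_ring_1 mat3"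
  assumes fU: "finite U" and K: "K = {x\<in>U. col x = c}"
  shows "val col s U its = (\<lambda>i j. \<Sum>p\<in>{p. p permutes K}. of_int (sign p) * val col s (U - K) (map (substi s p K) its) i j)"
proof -
  have KU: "K \<subseteq> U" using K by auto
  have fK: "finite K" using fU KU finite_subset by blast
  let ?P = "{p. p permutes K}"
  let ?Q = "CG col (U - K)"
  let ?g = "\<lambda>i j q. of_int (sign q) * prodi s q its i j"
  have main: "\<And>i j. (\<Sum>q\<in>CG col U. ?g i j q) = (\<Sum>pq\<in>?P \<times> ?Q. ?g i j (fst pq \<circ> snd pq))"
  proof -
    fix i j
    show "(\<Sum>q\<in>CG col U. ?g i j q) = (\<Sum>pq\<in>?P \<times> ?Q. ?g i j (fst pq \<circ> snd pq))"
    proof (rule sum.reindex_bij_witness[where j = "\<lambda>q. (\<lambda>x. if x \<in> K then q x else x, \<lambda>x. if x \<in> K then x else q x)"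
          and i = "\<lambda>pq. fst pq \<circ> snd pq"])
      fix q assume q: "q \<in> CG col U"
      then have qU: "q permutes U" and qc: "\<forall>x\<in>U. col (q x) = col x" unfolding CG_def by auto
      have iff: "\<forall>x\<in>U. q x \<in> K \<longleftrightarrow> x \<in> K"
        using qc K permutes_in_image[OF qU] by auto
      show ij: "fst (\<lambda>x. if x \<in> K then q x else x, \<lambda>x. if x \<in> K then x else q x) \<circ>
            snd (\<lambda>x. if x \<in> K then q x else x, \<lambda>x. if x \<in> K then x else q x) = q"
      proof
        fix x
        show "(fst (\<lambda>x. if x \<in> K then q x else x, \<lambda>x. if x \<in> K then x else q x) \<circ>
            snd (\<lambda>x. if x \<in> K then q x else x, \<lambda>x. if x \<in> K then x else q x)) x = q x"
        proof (cases "x \<in> U")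
          case True
          then show ?thesis using iff by auto
        next
          case False
          then have "q x = x" using qU permutes_not_in by fastforce
          then show ?thesis using False KU by auto
        qed
      qed
      show "(\<lambda>x. if x \<in> K then q x else x, \<lambda>x. if x \<in> K then x else q x) \<in> ?P \<times> ?Q"
        using permutes_restrict_in[OF qU KU iff] permutes_restrict_out[OF qU KU iff] qc
        unfolding CG_def by auto
      show "?g i j (fst (\<lambda>x. if x \<in> K then q x else x, \<lambda>x. if x \<in> K then x else q x) \<circ>
            snd (\<lambda>x. if x \<in> K then q x else x, \<lambda>x. if x \<in> K then x else q x)) = ?g i j q"
        by (simp only: ij)
    next
      fix pq assume pq: "pq \<in> ?P \<times> ?Q"
      obtain p q' where pq_eq: "pq = (p, q')" by (cases pq)
      have p: "p permutes K" and q': "q' permutes (U - K)" and qc: "\<forall>x\<in>U - K. col (q' x) = col x"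
        using pq pq_eq unfolding CG_def by auto
      have q'K: "\<And>x. x \<in> K \<Longrightarrow> q' x = x" using q' permutes_not_in by fastforce
      have q'nK: "\<And>x. x \<notin> K \<Longrightarrow> q' x \<notin> K"
      proof -
        fix x assume x: "x \<notin> K"
        show "q' x \<notin> K"
        proof (cases "x \<in> U")
          case True
          then show ?thesis using x permutes_in_image[OF q'] by auto
        next
          case False
          then show ?thesis using x q' permutes_not_in by fastforce
        qed
      qed
      have pnK: "\<And>x. x \<notin> K \<Longrightarrow> p x = x" using p permutes_not_in by fastforce
      show "(\<lambda>x. if x \<in> K then (fst pq \<circ> snd pq) x else x, \<lambda>x. if x \<in> K then x else (fst pq \<circ> snd pq) x) = pq"
        using pq_eq q'K q'nK pnK by (auto simp: fun_eq_iff)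
      have "p \<circ> q' permutes U"
        using permutes_compose[OF permutes_subset[OF q'] permutes_subset[OF p KU]] by auto
      moreover have "\<forall>x\<in>U. col ((p \<circ> q') x) = col x"
      proof
        fix x assume x: "x \<in> U"
        show "col ((p \<circ> q') x) = col x"
        proof (cases "x \<in> K")
          case True
          then have "p x \<in> K" using permutes_in_image[OF p] by auto
          then show ?thesis using True q'K K by auto
        next
          case False
          then show ?thesis using q'nK pnK qc x by auto
        qed
      qed
      ultimately show "fst pq \<circ> snd pq \<in> CG col U" using pq_eq unfolding CG_def by auto
    qed
  qed
  have fP: "finite ?P" using finite_permutations[OF fK] by simp
  have fQ: "finite ?Q" 
  proof -
    have "?Q \<subseteq> {q. q permutes (U - K)}" unfolding CG_def by auto
    then show ?thesis using finite_permutations[of "U - K"] fU finite_subset by auto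
  qed
  have split: "\<And>i j p q'. p \<in> ?P \<Longrightarrow> q' \<in> ?Q \<Longrightarrow> ?g i j (p \<circ> q')
      = of_int (sign p) * (of_int (sign q') * prodi s q' (map (substi s p K) its) i j)"
  proof -
    fix i j p q' assume p: "p \<in> ?P" and q': "q' \<in> ?Q"
    have pp: "p permutes K" using p by auto
    have qq: "q' permutes (U - K)" using q' unfolding CG_def by auto
    have "sign (p \<circ> q') = sign p * sign q'"
      using sign_compose permutation_permutes pp qq fK fU by (metis finite_Diff)
    then show "?g i j (p \<circ> q') = of_int (sign p) * (of_int (sign q') * prodi s q' (map (substi s p K) its) i j)"
      using prodi_substi[OF pp qq KU, of s its] by (simp add: mult.assoc)
  qed
  show ?thesis
  proof (rule ext, rule ext)
    fix i j
    have "val col s U its i j = (\<Sum>pq\<in>?P \<times> ?Q. ?g i j (fst pq \<circ> snd pq))"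
      unfolding val_def using main by simp
    also have "\<dots> = (\<Sum>p\<in>?P. \<Sum>q'\<in>?Q. ?g i j (p \<circ> q'))"
      by (simp add: sum.cartesian_product split_beta)
    also have "\<dots> = (\<Sum>p\<in>?P. \<Sum>q'\<in>?Q. of_int (sign p) * (of_int (sign q') * prodi s q' (map (substi s p K) its) i j))"
      by (intro sum.cong refl) (simp add: split)
    also have "\<dots> = (\<Sum>p\<in>?P. of_int (sign p) * val col s (U - K) (map (substi s p K) its) i j)"
      unfolding val_def by (simp add: sum_distrib_left)
    finally show "val col s U its i j = (\<Sum>p\<in>?P. of_int (sign p) * val col s (U - K) (map (substi s p K) its) i j)" .
  qed
qed


definition okits :: "'a::zero item list \<Rightarrow> bool" where
  "okits its \<longleftrightarrow> (\<forall>A. IM A \<in> set its \<longrightarrow> in3 A)"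

lemma in3_prodi: "(\<forall>x. in3 (s x)) \<Longrightarrow> okits its \<Longrightarrow> in3 (prodi s q its)"
proof (induction its)
  case Nil
  then show ?case by (simp add: in3_mone)
next
  case (Cons it its)
  then have "okits its" and "in3 (ev s q it)" unfolding okits_def by (cases it; auto)+
  then show ?case using Cons by (simp add: in3_mmul)
qed

lemma prodi_append: "in3 (prodi s q ys) \<Longrightarrow> prodi s q (xs @ ys) = mmul (prodi s q xs) (prodi s q ys)"
  by (induction xs) (simp_all add: mmul_mone_left mmul_assoc)

definition St :: "(nat \<Rightarrow> 'a::comm_ring_1 mat3) \<Rightarrow> nat list \<Rightarrow> 'a mat3" where
  "St s ks = (\<lambda>i j. \<Sum>p\<in>{p. p permutes set ks}. of_int (sign p) * prodi s p (map IV ks) i j)"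

lemma in3_St: "(\<forall>x. in3 (s x)) \<Longrightarrow> in3 (St s ks)"
proof -
  assume a: "\<forall>x. in3 (s x)"
  have "okits (map IV ks)" unfolding okits_def by auto
  then have "\<And>p. in3 (prodi s p (map IV ks))" using in3_prodi a by blast
  then show ?thesis unfolding St_def in3_def by auto
qed

lemma map_substi_id: "(\<forall>x. IV x \<in> set xs \<longrightarrow> x \<notin> K) \<Longrightarrow> map (substi s p K) xs = xs"
proof (induction xs)
  case (Cons a xs)
  then show ?case by (cases a) auto
qed simp

lemma map_substi_IV: "set ks \<subseteq> K \<Longrightarrow> map (substi s p K) (map IV ks) = map (\<lambda>x. IM (s (p x))) ks"
  by (induction ks) auto

lemma prodi_map_IM: "prodi s q (map (\<lambda>x. IM (s (p x))) ks) = prodi s p (map IV ks)"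
  by (induction ks) simp_all

lemma val_run:
  fixes s :: "nat \<Rightarrow> 'a::comm_ring_1 mat3"
  assumes fU: "finite U" and K: "set ks = {x\<in>U. col x = c}"
    and disj: "\<forall>x\<in>set ks. IV x \<notin> set pre \<and> IV x \<notin> set post"
    and s3: "\<forall>x. in3 (s x)" and ok: "okits post"
  shows "val col s U (pre @ map IV ks @ post) = val col s (U - set ks) (pre @ [IM (St s ks)] @ post)"
proof (rule ext, rule ext)
  fix i j
  let ?K = "set ks"
  let ?P = "{p. p permutes ?K}"
  let ?Q = "CG col (U - ?K)"
  have fP: "finite ?P" using finite_permutations by blast
  have in3post: "\<And>q. in3 (prodi s q post)" using in3_prodi[OF s3 ok] by blast
  have okX: "\<And>p. okits (map (\<lambda>x. IM (s (p x))) ks @ post)"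
    using ok s3 unfolding okits_def by auto
  have okY: "okits (IM (St s ks) # post)"
    using ok s3 in3_St[OF s3] unfolding okits_def by auto
  have e1: "\<And>p. map (substi s p ?K) (pre @ map IV ks @ post) = pre @ map (\<lambda>x. IM (s (p x))) ks @ post"
    using disj map_substi_id[of pre ?K s] map_substi_id[of post ?K s] map_substi_IV[of ks ?K s]
    by auto
  have e2: "\<And>p q. prodi s q (pre @ map (\<lambda>x. IM (s (p x))) ks @ post)
       = mmul (prodi s q pre) (mmul (prodi s p (map IV ks)) (prodi s q post))"
    using prodi_append[OF in3_prodi[OF s3 okX]] prodi_append[OF in3post] prodi_map_IM by metis
  have e3: "\<And>q. prodi s q (pre @ [IM (St s ks)] @ post)
       = mmul (prodi s q pre) (mmul (St s ks) (prodi s q post))"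
  proof -
    fix q
    have "prodi s q (pre @ [IM (St s ks)] @ post) = mmul (prodi s q pre) (prodi s q (IM (St s ks) # post))"
      using prodi_append[OF in3_prodi[OF s3 okY]] by simp
    then show "prodi s q (pre @ [IM (St s ks)] @ post) = mmul (prodi s q pre) (mmul (St s ks) (prodi s q post))"
      by simp
  qed
  have "val col s U (pre @ map IV ks @ post) i j
     = (\<Sum>p\<in>?P. of_int (sign p) * val col s (U - ?K) (map (substi s p ?K) (pre @ map IV ks @ post)) i j)"
    using val_remove[OF fU K, of s "pre @ map IV ks @ post"] by simp
  also have "\<dots> = (\<Sum>p\<in>?P. of_int (sign p) * val col s (U - ?K) (pre @ map (\<lambda>x. IM (s (p x))) ks @ post) i j)"
    by (simp only: e1)
  also have "\<dots> = (\<Sum>p\<in>?P. of_int (sign p) * (\<Sum>q\<in>?Q. of_int (sign q) *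
          mmul (prodi s q pre) (mmul (prodi s p (map IV ks)) (prodi s q post)) i j))"
    unfolding val_def e2 by simp
  also have "\<dots> = (\<Sum>q\<in>?Q. of_int (sign q) * (\<Sum>p\<in>?P. of_int (sign p) *
          mmul (prodi s q pre) (mmul (prodi s p (map IV ks)) (prodi s q post)) i j))"
    by (simp add: sum_distrib_left mult.left_commute sum.swap[of _ ?P ?Q])
  also have "\<dots> = (\<Sum>q\<in>?Q. of_int (sign q) * mmul (prodi s q pre) (mmul (St s ks) (prodi s q post)) i j)"
    unfolding St_def by (simp add: mmul_sum_mid)
  also have "\<dots> = val col s (U - set ks) (pre @ [IM (St s ks)] @ post) i j"
    unfolding val_def e3 by simp
  finally show "val col s U (pre @ map IV ks @ post) i j = val col s (U - set ks) (pre @ [IM (St s ks)] @ post) i j" .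
qed


datatype tok = Run "nat list" | Pc nat

fun expand :: "tok \<Rightarrow> 'a item list" where
  "expand (Run ks) = map IV ks"
| "expand (Pc x) = [IV x]"

fun collapse :: "(nat \<Rightarrow> 'a::comm_ring_1 mat3) \<Rightarrow> tok \<Rightarrow> 'a item" where
  "collapse s (Run ks) = IM (St s ks)"
| "collapse s (Pc x) = IV x"

fun tvars :: "tok \<Rightarrow> nat list" where
  "tvars (Run ks) = ks"
| "tvars (Pc x) = [x]"

fun rvars :: "tok \<Rightarrow> nat list" where
  "rvars (Run ks) = ks"
| "rvars (Pc x) = []"

lemma IV_in_expand: "IV x \<in> set (concat (map expand toks)) \<longleftrightarrow> x \<in> set (concat (map tvars toks))"
proof (induction toks)
  case (Cons t toks)
  then show ?case by (cases t) auto
qed simp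

lemma okits_expand: "okits (concat (map expand toks))"
proof (induction toks)
  case Nil
  then show ?case unfolding okits_def by simp
next
  case (Cons t toks)
  then show ?case unfolding okits_def by (cases t) auto
qed

lemma rvars_sub: "set (concat (map rvars toks)) \<subseteq> set (concat (map tvars toks))"
proof (induction toks)
  case (Cons t toks)
  then show ?case by (cases t) auto
qed simp

lemma val_toks:
  fixes s :: "nat \<Rightarrow> 'a::comm_ring_1 mat3"
  assumes "finite U" "distinct (concat (map tvars toks))"
    "\<forall>x \<in> set (concat (map tvars toks)). IV x \<notin> set pre"
    "\<forall>ks. Run ks \<in> set toks \<longrightarrow> ks \<noteq> [] \<and> set ks = {x\<in>U. col x = col (hd ks)}"
    "\<forall>x. in3 (s x)"
  shows "val col s U (pre @ concat (map expand toks))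
       = val col s (U - set (concat (map rvars toks))) (pre @ map (collapse s) toks)"
  using assms
proof (induction toks arbitrary: pre U)
  case Nil
  then show ?case by simp
next
  case (Cons t toks)
  show ?case
  proof (cases t)
    case (Pc x)
    have "val col s U (pre @ concat (map expand (t # toks))) = val col s U ((pre @ [IV x]) @ concat (map expand toks))"
      using Pc by simp
    also have "\<dots> = val col s (U - set (concat (map rvars toks))) ((pre @ [IV x]) @ map (collapse s) toks)"
    proof (rule Cons.IH)
      show "finite U" by fact
      show "distinct (concat (map tvars toks))" using Cons.prems(2) by simp
      show "\<forall>xa\<in>set (concat (map tvars toks)). IV xa \<notin> set (pre @ [IV x])"
        using Cons.prems(2,3) Pc by auto
      show "\<forall>ks. Run ks \<in> set toks \<longrightarrow> ks \<noteq> [] \<and> set ks = {x \<in> U. col x = col (hd ks)}"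
        using Cons.prems(4) by auto
      show "\<forall>x. in3 (s x)" by fact
    qed
    finally show ?thesis using Pc by simp
  next
    case (Run ks)
    have ks: "ks \<noteq> []" "set ks = {x\<in>U. col x = col (hd ks)}" using Cons.prems(4) Run by auto
    have d: "distinct (ks @ concat (map tvars toks))" using Cons.prems(2) Run by simp
    have "val col s U (pre @ concat (map expand (t # toks))) = val col s U (pre @ map IV ks @ concat (map expand toks))"
      using Run by simp
    also have "\<dots> = val col s (U - set ks) (pre @ [IM (St s ks)] @ concat (map expand toks))"
    proof (rule val_run)
      show "finite U" by fact
      show "set ks = {x\<in>U. col x = col (hd ks)}" by (rule ks(2))
      show "\<forall>x\<in>set ks. IV x \<notin> set pre \<and> IV x \<notin> set (concat (map expand toks))"
        using Cons.prems(3) Run d IV_in_expand by fastforce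
      show "\<forall>x. in3 (s x)" by fact
      show "okits (concat (map expand toks))" by (rule okits_expand)
    qed
    also have "\<dots> = val col s ((U - set ks) - set (concat (map rvars toks))) ((pre @ [IM (St s ks)]) @ map (collapse s) toks)"
    proof -
      have "val col s (U - set ks) ((pre @ [IM (St s ks)]) @ concat (map expand toks))
         = val col s ((U - set ks) - set (concat (map rvars toks))) ((pre @ [IM (St s ks)]) @ map (collapse s) toks)"
      proof (rule Cons.IH)
        show "finite (U - set ks)" using Cons.prems(1) by simp
        show "distinct (concat (map tvars toks))" using d by simp
        show "\<forall>x\<in>set (concat (map tvars toks)). IV x \<notin> set (pre @ [IM (St s ks)])"
          using Cons.prems(3) Run by auto
        show "\<forall>ks'. Run ks' \<in> set toks \<longrightarrow> ks' \<noteq> [] \<and> set ks' = {x \<in> U - set ks. col x = col (hd ks')}"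
        proof (intro allI impI)
          fix ks' assume r: "Run ks' \<in> set toks"
          then have a: "ks' \<noteq> []" "set ks' = {x \<in> U. col x = col (hd ks')}" using Cons.prems(4) by auto
          have "set ks' \<subseteq> set (concat (map tvars toks))" using r by force
          then have "set ks' \<inter> set ks = {}" using d by auto
          then show "ks' \<noteq> [] \<and> set ks' = {x \<in> U - set ks. col x = col (hd ks')}" using a by auto
        qed
        show "\<forall>x. in3 (s x)" by fact
      qed
      then show ?thesis by simp
    qed
    moreover have eqU: "U - set ks - set (concat (map rvars toks)) = U - set (concat (map rvars (t # toks)))"
      using Run by auto
    ultimately show ?thesis using Run by (simp only: eqU) simp
  qed
qed

section \<open>Two-element classes and the wrap\<close>

lemma perms_pair_sum:
  assumes "x \<noteq> y"
  shows "(\<Sum>p\<in>{p. p permutes {x, y}}. f p) = f id + f (transpose x y)"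
proof -
  have a: "finite {y}" "x \<notin> {y}" using assms by auto
  show ?thesis
    unfolding sum_over_permutations_insert[OF a] using assms by simp
qed

lemma val_pair:
  fixes s :: "nat \<Rightarrow> 'a::comm_ring_1 mat3"
  assumes fU: "finite U" and K: "{x, y} = {z\<in>U. col z = c}" and xy: "x \<noteq> y"
  shows "val col s U its = (\<lambda>i j. val col s (U - {x, y}) (map (substi s id {x, y}) its) i j
                               - val col s (U - {x, y}) (map (substi s (transpose x y) {x, y}) its) i j)"
proof (rule ext, rule ext)
  fix i j
  have "val col s U its i j = (\<Sum>p\<in>{p. p permutes {x, y}}. of_int (sign p) *
               val col s (U - {x, y}) (map (substi s p {x, y}) its) i j)"
    using val_remove[OF fU K, of s its] by simp
  also have "\<dots> = of_int (sign (id::nat\<Rightarrow>nat)) * val col s (U - {x, y}) (map (substi s id {x, y}) its) i j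
     + of_int (sign (transpose x y)) * val col s (U - {x, y}) (map (substi s (transpose x y) {x, y}) its) i j"
    by (rule perms_pair_sum[OF xy])
  finally show "val col s U its i j = val col s (U - {x, y}) (map (substi s id {x, y}) its) i j
                               - val col s (U - {x, y}) (map (substi s (transpose x y) {x, y}) its) i j"
    using xy by (simp add: sign_swap_id)
qed

fun W :: "'a::comm_ring_1 mat3 \<Rightarrow> 'a mat3 \<Rightarrow> nat \<Rightarrow> 'a mat3 \<Rightarrow> 'a mat3" where
  "W Xb Xt 0 S = S"
| "W Xb Xt (Suc k) S = (\<lambda>i j. mmul Xb (W Xb Xt k (mmul S Xt)) i j - mmul Xt (W Xb Xt k (mmul S Xb)) i j)"

definition mats :: "'a::zero item list \<Rightarrow> bool" where
  "mats l \<longleftrightarrow> (\<forall>it\<in>set l. \<exists>A. it = IM A \<and> in3 A)"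

lemma mats_okits: "mats l \<Longrightarrow> okits l"
  unfolding mats_def okits_def by auto

lemma prodi_mats: "mats l \<Longrightarrow> prodi s q l = prodi s id l"
proof (induction l)
  case (Cons a l)
  then obtain A where "a = IM A" unfolding mats_def by auto
  then show ?case using Cons unfolding mats_def by simp
qed simp

lemma mats_substi: "mats l \<Longrightarrow> map (substi s p K) l = l"
  by (rule map_substi_id) (auto simp: mats_def)

lemma mmul_diff_mid:
  "mmul P (mmul (\<lambda>i j. A i j - B i j) Q) i j = mmul P (mmul A Q) i j - mmul P (mmul B Q) i j"
  unfolding mmul3 by (simp add: algebra_simps sum_subtractf)

lemma CG_empty: "CG col {} = {id}"
  unfolding CG_def by auto

lemma val_empty: "val col s {} its = prodi s id its"
  unfolding val_def CG_empty by simp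


lemma mats_append: "mats (xs @ ys) \<longleftrightarrow> mats xs \<and> mats ys"
  unfolding mats_def by auto

lemma in3_prodi_mats: "mats l \<Longrightarrow> in3 (prodi s q l)"
proof (induction l)
  case Nil
  then show ?case by (simp add: in3_mone)
next
  case (Cons a l)
  then obtain A where "a = IM A" "in3 A" unfolding mats_def by auto
  then show ?case using Cons by (simp add: in3_mmul mats_def)
qed

lemma prodi_snoc_mat: "in3 X \<Longrightarrow> prodi s q (xs @ [IM X]) = mmul (prodi s q xs) X"
  using prodi_append[of s q "[IM X]" xs] by (simp add: mmul_mone_right)

lemma val_wrap:
  fixes s :: "nat \<Rightarrow> 'a::comm_ring_1 mat3"
  assumes "length bs = length ts" "distinct (bs @ ts)" "U = set bs \<union> set ts"
    "\<forall>i<length bs. {x\<in>U. col x = col (bs!i)} = {bs!i, ts!i}"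
    "\<forall>x\<in>set bs. s x = Xb" "\<forall>x\<in>set ts. s x = Xt" "in3 Xb" "in3 Xt"
    "mats pre" "mats mid" "mats post"
  shows "val col s U (pre @ map IV bs @ mid @ map IV ts @ post)
       = mmul (prodi s id pre) (mmul (W Xb Xt (length bs) (prodi s id mid)) (prodi s id post))"
  using assms
proof (induction bs arbitrary: ts U pre mid)
  case Nil
  then have "ts = []" "U = {}" by auto
  moreover have "in3 (prodi s id post)" "in3 (prodi s id (mid @ post))"
    using Nil.prems in3_prodi_mats mats_append by metis+
  ultimately show ?case using Nil.prems
    by (simp add: val_empty prodi_append id_def)
next
  case (Cons b bs)
  obtain t ts' where ts: "ts = t # ts'" using Cons.prems(1) by (cases ts) auto
  have bt: "b \<noteq> t" using Cons.prems(2) ts by auto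
  have fU: "finite U" using Cons.prems(3) by simp
  have fib: "{b, t} = {x\<in>U. col x = col b}" using Cons.prems(4) ts by force
  have U': "U - {b, t} = set bs \<union> set ts'" using Cons.prems(2,3) ts by auto
  have sb: "s b = Xb" and st: "s t = Xt" using Cons.prems(5,6) ts by auto
  have nb: "\<forall>x. IV x \<in> set (pre @ mid @ post) \<longrightarrow> x \<notin> {b, t}"
    using Cons.prems(9,10,11) unfolding mats_def by auto
  have nbs: "\<forall>x \<in> set bs \<union> set ts'. x \<notin> {b, t}" using Cons.prems(2) ts by auto
  have m1: "map (substi s id {b, t}) (pre @ map IV (b # bs) @ mid @ map IV ts @ post)
        = (pre @ [IM Xb]) @ map IV bs @ (mid @ [IM Xt]) @ map IV ts' @ post"
    using ts sb st bt map_substi_id[of pre "{b,t}"] map_substi_id[of mid "{b,t}"] map_substi_id[of post "{b,t}"]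
      map_substi_id[of "map IV bs" "{b,t}"] map_substi_id[of "map IV ts'" "{b,t}"] nb nbs
    by auto
  have m2: "map (substi s (transpose b t) {b, t}) (pre @ map IV (b # bs) @ mid @ map IV ts @ post)
        = (pre @ [IM Xt]) @ map IV bs @ (mid @ [IM Xb]) @ map IV ts' @ post"
    using ts sb st bt map_substi_id[of pre "{b,t}"] map_substi_id[of mid "{b,t}"] map_substi_id[of post "{b,t}"]
      map_substi_id[of "map IV bs" "{b,t}"] map_substi_id[of "map IV ts'" "{b,t}"] nb nbs
    by auto
  have IHc: "\<And>Y Z. in3 Y \<Longrightarrow> in3 Z \<Longrightarrow> val col s (U - {b, t}) ((pre @ [IM Y]) @ map IV bs @ (mid @ [IM Z]) @ map IV ts' @ post)
       = mmul (prodi s id (pre @ [IM Y])) (mmul (W Xb Xt (length bs) (prodi s id (mid @ [IM Z]))) (prodi s id post))"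
  proof -
    fix Y Z :: "'a mat3" assume Y: "in3 Y" and Z: "in3 Z"
    show "val col s (U - {b, t}) ((pre @ [IM Y]) @ map IV bs @ (mid @ [IM Z]) @ map IV ts' @ post)
       = mmul (prodi s id (pre @ [IM Y])) (mmul (W Xb Xt (length bs) (prodi s id (mid @ [IM Z]))) (prodi s id post))"
    proof (rule Cons.IH)
      show "length bs = length ts'" using Cons.prems(1) ts by simp
      show "distinct (bs @ ts')" using Cons.prems(2) ts by simp
      show "U - {b, t} = set bs \<union> set ts'" by (rule U')
      show "\<forall>i<length bs. {x \<in> U - {b, t}. col x = col (bs ! i)} = {bs ! i, ts' ! i}"
      proof (intro allI impI)
        fix i assume i: "i < length bs"
        have "{x\<in>U. col x = col (bs ! i)} = {bs ! i, ts' ! i}"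
          using Cons.prems(4)[rule_format, of "Suc i"] i ts by simp
        moreover have "bs ! i \<notin> {b, t}" "ts' ! i \<notin> {b, t}"
          using nbs i Cons.prems(1) ts by auto
        ultimately show "{x \<in> U - {b, t}. col x = col (bs ! i)} = {bs ! i, ts' ! i}"
          by blast
      qed
      show "\<forall>x\<in>set bs. s x = Xb" "\<forall>x\<in>set ts'. s x = Xt" using Cons.prems(5,6) ts by auto
      show "in3 Xb" "in3 Xt" by fact+
      show "mats (pre @ [IM Y])" "mats (mid @ [IM Z])" using Cons.prems(9,10) Y Z unfolding mats_def by auto
      show "mats post" by fact
    qed
  qed
  have x3: "in3 Xb" "in3 Xt" by fact+
  have pm: "\<And>l. mats l \<Longrightarrow> in3 (prodi s id l)"
    using in3_prodi_mats by blast
  have pre3: "in3 (prodi s id pre)" and mid3: "in3 (prodi s id mid)" using pm Cons.prems(9,10) by auto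
  show ?case
  proof (rule ext, rule ext)
    fix i j
    have "val col s U (pre @ map IV (b # bs) @ mid @ map IV ts @ post) i j
       = val col s (U - {b, t}) ((pre @ [IM Xb]) @ map IV bs @ (mid @ [IM Xt]) @ map IV ts' @ post) i j
       - val col s (U - {b, t}) ((pre @ [IM Xt]) @ map IV bs @ (mid @ [IM Xb]) @ map IV ts' @ post) i j"
      unfolding m1[symmetric] m2[symmetric] by (simp only: val_pair[OF fU fib bt, of s])
    also have "\<dots> = mmul (mmul (prodi s id pre) Xb) (mmul (W Xb Xt (length bs) (mmul (prodi s id mid) Xt)) (prodi s id post)) i j
       - mmul (mmul (prodi s id pre) Xt) (mmul (W Xb Xt (length bs) (mmul (prodi s id mid) Xb)) (prodi s id post)) i j"
      using IHc[OF x3(1) x3(2)] IHc[OF x3(2) x3(1)] by (simp add: prodi_snoc_mat x3)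
    also have "\<dots> = mmul (prodi s id pre) (mmul (W Xb Xt (length (b # bs)) (prodi s id mid)) (prodi s id post)) i j"
      by (simp only: W.simps length_Cons mmul_diff_mid mmul_assoc)
    finally show "val col s U (pre @ map IV (b # bs) @ mid @ map IV ts @ post) i j
       = mmul (prodi s id pre) (mmul (W Xb Xt (length (b # bs)) (prodi s id mid)) (prodi s id post)) i j" .
  qed
qed


definition sends :: "'a::comm_ring_1 mat3 \<Rightarrow> nat \<Rightarrow> nat \<Rightarrow> bool" where
  "sends A i j \<longleftrightarrow> j < 3 \<and> A i j \<noteq> 0 \<and> (\<forall>k<3. k \<noteq> j \<longrightarrow> A i k = 0)"

definition kills :: "'a::comm_ring_1 mat3 \<Rightarrow> nat \<Rightarrow> bool" where
  "kills A i \<longleftrightarrow> (\<forall>k<3. A i k = 0)"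

lemma mmul_row: "j < 3 \<Longrightarrow> (\<forall>k<3. k \<noteq> j \<longrightarrow> A i k = 0) \<Longrightarrow> mmul A B i l = A i j * B j l"
proof -
  assume j: "j < 3" and z: "\<forall>k<3. k \<noteq> j \<longrightarrow> A i k = 0"
  have "mmul A B i l = (\<Sum>k<3. if k = j then A i j * B j l else 0)"
    unfolding mmul_def by (rule sum.cong) (use z in auto)
  also have "\<dots> = A i j * B j l" using j by simp
  finally show ?thesis .
qed

lemma sends_mmul:
  fixes A B :: "'a::idom mat3"
  assumes sA: "sends A i j" and sB: "sends B j k"
  shows "sends (mmul A B) i k"
proof -
  have row: "\<And>l. mmul A B i l = A i j * B j l"
    using sA unfolding sends_def by (intro mmul_row) auto
  show ?thesis using sA sB unfolding sends_def row by auto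
qed

lemma kills_mmul: "kills A i \<Longrightarrow> kills (mmul A B) i"
  unfolding kills_def mmul_def by simp

lemma sends_kills_mmul:
  assumes sA: "sends A i j" and kB: "kills B j"
  shows "kills (mmul A B) i"
proof -
  have row: "\<And>l. mmul A B i l = A i j * B j l"
    using sA unfolding sends_def by (intro mmul_row) auto
  show ?thesis using kB unfolding kills_def row by auto
qed

lemma sends_diff: "sends A i j \<Longrightarrow> kills B i \<Longrightarrow> sends (\<lambda>a b. A a b - B a b) i j"
  unfolding kills_def sends_def by auto

lemma sends_nz: "sends A i j \<Longrightarrow> A i j \<noteq> 0"
  unfolding sends_def by auto

lemma sends_mone: "u < 3 \<Longrightarrow> sends mone u u"
  unfolding sends_def mone_def by auto

lemma sends_prodi_append:
  fixes s :: "nat \<Rightarrow> 'a::idom mat3"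
  shows "in3 (prodi s q ys) \<Longrightarrow> sends (prodi s q xs) u v \<Longrightarrow> sends (prodi s q ys) v w
     \<Longrightarrow> sends (prodi s q (xs @ ys)) u w"
  by (simp add: prodi_append sends_mmul)

lemma kills_prodi_append:
  fixes s :: "nat \<Rightarrow> 'a::idom mat3"
  shows "in3 (prodi s q ys) \<Longrightarrow> kills (prodi s q xs) u \<Longrightarrow> kills (prodi s q (xs @ ys)) u"
  by (simp add: prodi_append kills_mmul)

lemma sends_fix_list:
  fixes s :: "nat \<Rightarrow> 'a::idom mat3"
  assumes "\<forall>it\<in>set l. \<exists>A. it = IM A \<and> in3 A \<and> sends A u u" "u < 3"
  shows "sends (prodi s q l) u u"
  using assms
proof (induction l)
  case Nil
  then show ?case by (simp add: sends_mone)
next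
  case (Cons it l)
  then obtain A where A: "it = IM A" "sends A u u" by auto
  then show ?case using Cons by (simp add: sends_mmul)
qed

lemma sends_flip_list:
  fixes s :: "nat \<Rightarrow> 'a::idom mat3"
  assumes "\<forall>it\<in>set l. \<exists>A. it = IM A \<and> in3 A \<and> sends A 1 2 \<and> sends A 2 1" "u = 1 \<or> u = 2"
  shows "sends (prodi s q l) u (if even (length l) then u else 3 - u)"
  using assms
proof (induction l arbitrary: u)
  case Nil
  then show ?case using sends_mone[of u] by auto
next
  case (Cons it l)
  then obtain A where A: "it = IM A" "sends A 1 2" "sends A 2 1" by auto
  have v: "3 - u = 1 \<or> 3 - u = 2" using Cons.prems(2) by auto
  have IH: "sends (prodi s q l) (3 - u) (if even (length l) then 3 - u else 3 - (3 - u))"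
    using Cons.IH[OF _ v] Cons.prems(1) by auto
  have a: "sends A u (3 - u)" using A Cons.prems(2) by auto
  have "sends (mmul A (prodi s q l)) u (if even (length l) then 3 - u else 3 - (3 - u))"
    using sends_mmul[OF a IH] .
  moreover have "3 - (3 - u) = u" using Cons.prems(2) by auto
  ultimately show ?case using A by auto
qed

lemma sends_concat_list:
  fixes s :: "nat \<Rightarrow> 'a::idom mat3"
  assumes "\<forall>b\<in>set bl. mats b \<and> sends (prodi s q b) u u" "u < 3"
  shows "sends (prodi s q (concat bl)) u u"
  using assms
proof (induction bl)
  case Nil
  then show ?case by (simp add: sends_mone)
next
  case (Cons b bl)
  have m: "mats (concat bl)" using Cons.prems(1) unfolding mats_def by auto
  have IH: "sends (prodi s q (concat bl)) u u" using Cons by auto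
  have hb: "sends (prodi s q b) u u" using Cons.prems by auto
  show ?case using sends_prodi_append[OF in3_prodi_mats[OF m] hb IH] by simp
qed

lemma mmul_row_eq: "(\<forall>l. A i l = B i l) \<Longrightarrow> mmul A P i j = mmul B P i j"
  unfolding mmul_def by simp

lemma sends_row_eq: "(\<forall>l. A i l = B i l) \<Longrightarrow> sends A i j = sends B i j"
  unfolding sends_def by simp

definition mE00 :: "'a::comm_ring_1 mat3" where
  "mE00 = (\<lambda>i j. if i = 0 \<and> j = 0 then 1 else 0)"
definition mD :: "'a::comm_ring_1 mat3" where
  "mD = (\<lambda>i j. if (i = 1 \<and> j = 1) \<or> (i = 2 \<and> j = 2) then 1 else 0)"
definition mJ :: "'a::comm_ring_1 mat3" where
  "mJ = (\<lambda>i j. if (i = 1 \<and> j = 2) \<or> (i = 2 \<and> j = 1) then 1 else 0)"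
definition mH :: "'a::comm_ring_1 mat3" where
  "mH = (\<lambda>i j. if i = 1 \<and> j = 1 then 1 else if i = 2 \<and> j = 2 then -1 else 0)"
definition mE12 :: "'a::comm_ring_1 mat3" where
  "mE12 = (\<lambda>i j. if i = 1 \<and> j = 2 then 1 else 0)"
definition ma :: "'a::comm_ring_1 mat3" where
  "ma = (\<lambda>i j. if i = 0 \<and> j = 1 then 1 else if i = 2 \<and> j = 0 then -1 else 0)"
definition mb :: "'a::comm_ring_1 mat3" where
  "mb = (\<lambda>i j. if (i = 0 \<and> j = 2) \<or> (i = 1 \<and> j = 0) then 1 else 0)"

lemmas mdefs = mE00_def mD_def mJ_def mH_def mE12_def ma_def mb_def

lemma in3_concrete: "in3 mE00" "in3 mD" "in3 mJ" "in3 mH" "in3 mE12" "in3 ma" "in3 mb" "in3 mzero"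
  unfolding in3_def mdefs mzero_def by auto

definition comm :: "'a::comm_ring_1 mat3 \<Rightarrow> 'a mat3 \<Rightarrow> 'a mat3" where
  "comm A B = (\<lambda>i j. mmul A B i j - mmul B A i j)"

definition st3 :: "'a::comm_ring_1 mat3 \<Rightarrow> 'a mat3 \<Rightarrow> 'a mat3 \<Rightarrow> 'a mat3" where
  "st3 A B C = (\<lambda>i j. mmul A (mmul B C) i j - mmul A (mmul C B) i j - mmul B (mmul A C) i j
      + mmul B (mmul C A) i j + mmul C (mmul A B) i j - mmul C (mmul B A) i j)"

lemma in3_comm: "in3 A \<Longrightarrow> in3 B \<Longrightarrow> in3 (comm A B)"
  unfolding comm_def in3_def mmul_def by auto

lemma in3_st3: "in3 A \<Longrightarrow> in3 B \<Longrightarrow> in3 C \<Longrightarrow> in3 (st3 A B C)"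
  unfolding st3_def in3_def mmul_def by auto

lemma comm_JH: "comm mJ mH = (\<lambda>i j. if i = 1 \<and> j = 2 then -2 else if i = 2 \<and> j = 1 then (2::'a::comm_ring_1) else 0)"
  unfolding comm_def mmul_def sum3 mdefs by (auto simp: fun_eq_iff)

lemma comm_ab: "comm ma mb = (\<lambda>i j. if i = 0 \<and> j = 0 then 2 else if (i = 1 \<and> j = 1) \<or> (i = 2 \<and> j = 2) then (-1::'a::comm_ring_1) else 0)"
  unfolding comm_def mmul_def sum3 mdefs by (auto simp: fun_eq_iff)

lemma st3_JHE: "st3 mJ mH mE12 = (\<lambda>i j. if (i = 1 \<and> j = 1) \<or> (i = 2 \<and> j = 2) then (3::'a::comm_ring_1) else 0)"
  unfolding st3_def mmul_def sum3 mdefs by (auto simp: fun_eq_iff)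

lemma sends_concrete:
  fixes dummy :: "'a::field_char_0"
  shows
  "sends (mE00::'a mat3) 0 0" "kills (mE00::'a mat3) 1" "kills (mE00::'a mat3) 2"
  "sends (mD::'a mat3) 1 1" "sends (mD::'a mat3) 2 2"
  "sends (mJ::'a mat3) 1 2" "sends (mJ::'a mat3) 2 1"
  "sends (comm mJ mH::'a mat3) 1 2" "sends (comm mJ mH::'a mat3) 2 1"
  "sends (st3 mJ mH mE12::'a mat3) 1 1" "sends (st3 mJ mH mE12::'a mat3) 2 2"
  "sends (comm ma mb::'a mat3) 0 0" "sends (comm ma mb::'a mat3) 1 1" "sends (comm ma mb::'a mat3) 2 2"
  "sends (ma::'a mat3) 0 1" "sends (ma::'a mat3) 2 0" "kills (ma::'a mat3) 1"
  "sends (mb::'a mat3) 1 0"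
  unfolding comm_JH comm_ab st3_JHE unfolding sends_def kills_def mdefs
  by (auto simp: numeral_3_eq_3 less_Suc_eq)


section \<open>Column alternations of size 1, 2, 3\<close>

lemma St_1: "in3 (s x) \<Longrightarrow> St s [x] = s x"
  unfolding St_def by (simp add: mmul_mone_right)

lemma St_2:
  assumes "x \<noteq> y" "in3 (s x)" "in3 (s y)"
  shows "St s [x, y] = comm (s x) (s y)"
proof (rule ext, rule ext)
  fix i j
  have "St s [x, y] i j = of_int (sign (id::nat\<Rightarrow>nat)) * prodi s id [IV x, IV y] i j
      + of_int (sign (transpose x y)) * prodi s (transpose x y) [IV x, IV y] i j"
    unfolding St_def by (simp only: list.set set_empty2 perms_pair_sum[OF assms(1)] list.map)
  then show "St s [x, y] i j = comm (s x) (s y) i j"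
    using assms by (simp add: sign_swap_id mmul_mone_right comm_def)
qed

lemma St_3:
  assumes d: "distinct [x, y, z]" and i3: "in3 (s x)" "in3 (s y)" "in3 (s z)"
  shows "St s [x, y, z] = st3 (s x) (s y) (s z)"
proof (rule ext, rule ext)
  fix i j
  have yz: "y \<noteq> z" using d by auto
  have f: "finite {y, z}" "x \<notin> {y, z}" using d by auto
  let ?f = "\<lambda>p. of_int (sign p) * prodi s p [IV x, IV y, IV z] i j"
  have "St s [x, y, z] i j = (\<Sum>p\<in>{p. p permutes insert x {y, z}}. ?f p)"
    unfolding St_def by simp
  also have "\<dots> = (\<Sum>b\<in>insert x {y, z}. \<Sum>q\<in>{p. p permutes {y, z}}. ?f (transpose x b \<circ> q))"
    by (rule sum_over_permutations_insert[OF f])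
  also have "\<dots> = (\<Sum>b\<in>insert x {y, z}. ?f (transpose x b \<circ> id) + ?f (transpose x b \<circ> transpose y z))"
    by (simp only: perms_pair_sum[OF yz])
  also have "\<dots> = st3 (s x) (s y) (s z) i j"
    using d i3 by (simp add: sign_swap_id sign_compose permutation_swap_id mmul_mone_right st3_def
        algebra_simps)
  finally show "St s [x, y, z] i j = st3 (s x) (s y) (s z) i j" .
qed


lemma mmul_E00_row: "i \<noteq> 0 \<Longrightarrow> mmul mE00 X i j = 0"
  unfolding mmul_def mE00_def by simp

lemma mmul_D_row: "i = 1 \<or> i = 2 \<Longrightarrow> mmul mD X i j = X i j"
  unfolding mmul_def mD_def sum3 by auto

lemma E00_idem: "mmul mE00 mE00 = mE00"
  unfolding mmul_def mE00_def sum3 by (auto simp: fun_eq_iff)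

lemma W_row: "i = 1 \<or> i = 2 \<Longrightarrow> W mD mE00 k S i j = (if k = 0 then S i j else mmul S mE00 i j)"
proof (induction k arbitrary: S)
  case 0
  then show ?case by simp
next
  case (Suc k)
  have "W mD mE00 (Suc k) S i j = W mD mE00 k (mmul S mE00) i j"
    using Suc.prems by (auto simp: mmul_E00_row mmul_D_row)
  also have "\<dots> = mmul S mE00 i j"
    using Suc.IH[OF Suc.prems, of "mmul S mE00"] by (simp add: mmul_assoc E00_idem)
  finally show ?case by simp
qed

section \<open>Glue: evaluation of Young symmetrized delta polynomials\<close>

lemma evalp_delta:
  fixes L :: "nat list list" and s :: "nat \<Rightarrow> 'a::comm_ring_1 mat3"
  assumes sg: "sg permutes {..<totaln L}"
    and rowc: "\<forall>p\<in>rowgrp L. \<forall>x<totaln L. s (p x) = s x"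
  shows "evalp (totaln L) (ysym L (\<lambda>\<sigma>. if \<sigma> = sg then 1 else 0)) s i j
        = of_nat (card (rowgrp L)) * (\<Sum>q\<in>colgrp L. of_int (sign q) * monoval (totaln L) s (q \<circ> sg) i j)"
proof -
  let ?n = "totaln L"
  let ?P = "{\<sigma>. \<sigma> permutes {..<?n}}"
  let ?R = "rowgrp L" and ?C = "colgrp L"
  let ?c = "\<lambda>\<sigma>::nat\<Rightarrow>nat. if \<sigma> = sg then 1 else (0::'a)"
  have fR: "finite ?R" using finite_permutations[of "{..<?n}"] unfolding rowgrp_def
    by (rule finite_subset[rotated]) auto
  have fC: "finite ?C" using finite_permutations[of "{..<?n}"] unfolding colgrp_def
    by (rule finite_subset[rotated]) auto
  have fP: "finite ?P" using finite_permutations by blast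
  have pR: "\<And>p. p \<in> ?R \<Longrightarrow> p permutes {..<?n}" unfolding rowgrp_def by auto
  have qC: "\<And>q. q \<in> ?C \<Longrightarrow> q permutes {..<?n}" unfolding colgrp_def by auto
  have inner: "\<And>p q. p \<in> ?R \<Longrightarrow> q \<in> ?C \<Longrightarrow>
      (\<Sum>\<sigma>\<in>?P. ?c (inv (p \<circ> q) \<circ> \<sigma>) * monoval ?n s \<sigma> i j) = monoval ?n s (p \<circ> q \<circ> sg) i j"
  proof -
    fix p q assume p: "p \<in> ?R" and q: "q \<in> ?C"
    have pq: "p \<circ> q permutes {..<?n}" using permutes_compose[OF qC[OF q] pR[OF p]] .
    have io: "(p \<circ> q) \<circ> inv (p \<circ> q) = id" "inv (p \<circ> q) \<circ> (p \<circ> q) = id"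
      using permutes_inv_o[OF pq] by auto
    have eqv: "\<And>\<sigma>. (inv (p \<circ> q) \<circ> \<sigma> = sg) \<longleftrightarrow> (\<sigma> = p \<circ> q \<circ> sg)"
    proof
      fix \<sigma> assume "inv (p \<circ> q) \<circ> \<sigma> = sg"
      then have "(p \<circ> q) \<circ> (inv (p \<circ> q) \<circ> \<sigma>) = (p \<circ> q) \<circ> sg" by simp
      then show "\<sigma> = p \<circ> q \<circ> sg" using io(1) by (simp add: o_assoc)
    next
      fix \<sigma> assume "\<sigma> = p \<circ> q \<circ> sg"
      then show "inv (p \<circ> q) \<circ> \<sigma> = sg" using io(2) by (simp add: o_assoc)
    qed
    have mem: "p \<circ> q \<circ> sg \<in> ?P" using permutes_compose[OF sg pq] by simp
    have "(\<Sum>\<sigma>\<in>?P. ?c (inv (p \<circ> q) \<circ> \<sigma>) * monoval ?n s \<sigma> i j)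
        = (\<Sum>\<sigma>\<in>?P. if \<sigma> = p \<circ> q \<circ> sg then monoval ?n s \<sigma> i j else 0)"
      by (rule sum.cong) (simp_all add: eqv)
    also have "\<dots> = monoval ?n s (p \<circ> q \<circ> sg) i j" using mem fP by (simp add: sum.delta')
    finally show "(\<Sum>\<sigma>\<in>?P. ?c (inv (p \<circ> q) \<circ> \<sigma>) * monoval ?n s \<sigma> i j) = monoval ?n s (p \<circ> q \<circ> sg) i j" .
  qed
  have mono_eq: "\<And>p q. p \<in> ?R \<Longrightarrow> q \<in> ?C \<Longrightarrow> monoval ?n s (p \<circ> q \<circ> sg) = monoval ?n s (q \<circ> sg)"
  proof -
    fix p q assume p: "p \<in> ?R" and q: "q \<in> ?C"
    have "\<And>k. k \<in> set [0..<?n] \<Longrightarrow> s ((p \<circ> q \<circ> sg) k) = s ((q \<circ> sg) k)"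
    proof -
      fix k assume "k \<in> set [0..<?n]"
      then have "sg k < ?n" using permutes_in_image[OF sg] by auto
      then have "q (sg k) < ?n" using permutes_in_image[OF qC[OF q]] by auto
      then show "s ((p \<circ> q \<circ> sg) k) = s ((q \<circ> sg) k)" using rowc p by auto
    qed
    then show "monoval ?n s (p \<circ> q \<circ> sg) = monoval ?n s (q \<circ> sg)"
      unfolding monoval_def by (intro foldr_cong) auto
  qed
  have "evalp ?n (ysym L ?c) s i j
      = (\<Sum>\<sigma>\<in>?P. (\<Sum>p\<in>?R. \<Sum>q\<in>?C. of_int (sign q) * ?c (inv (p \<circ> q) \<circ> \<sigma>)) * monoval ?n s \<sigma> i j)"
    unfolding evalp_def ysym_def pact_def by simp
  also have "\<dots> = (\<Sum>p\<in>?R. \<Sum>q\<in>?C. of_int (sign q) * (\<Sum>\<sigma>\<in>?P. ?c (inv (p \<circ> q) \<circ> \<sigma>) * monoval ?n s \<sigma> i j))"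
    by (simp add: sum_distrib_right sum_distrib_left mult.assoc sum.swap[of _ ?P])
  also have "\<dots> = (\<Sum>p\<in>?R. \<Sum>q\<in>?C. of_int (sign q) * monoval ?n s (q \<circ> sg) i j)"
    by (intro sum.cong refl) (simp add: inner mono_eq)
  also have "\<dots> = of_nat (card ?R) * (\<Sum>q\<in>?C. of_int (sign q) * monoval ?n s (q \<circ> sg) i j)"
    by simp
  finally show ?thesis .
qed

lemma sum_fun_apply: "(sum f A) x = sum (\<lambda>a. f a x) A"
  by (induction A rule: infinite_finite_induct) auto

lemma vs_scl: "vector_space (scl :: 'a::field \<Rightarrow> ((nat \<Rightarrow> 'a mat3) \<Rightarrow> 'a mat3) \<Rightarrow> _)"
  unfolding vector_space_def module_def scl_def
  by (auto simp: fun_eq_iff algebra_simps)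

lemma ceil_half: "\<lceil>real n / 2\<rceil> = int ((n + 1) div 2)"
proof (cases "even n")
  case True
  then obtain k where "n = 2 * k" by blast
  then show ?thesis by simp
next
  case False
  then obtain k where k: "n = 2 * k + 1" using oddE by blast
  have "\<lceil>real n / 2\<rceil> = int k + 1"
    unfolding k by (intro ceiling_unique) auto
  then show ?thesis using k by simp
qed

lemma part_facts:
  "(mE00::'a::comm_ring_1 mat3) \<in> mpart 0" "(mD::'a mat3) \<in> mpart 0"
  "(mJ::'a mat3) \<in> mpart 1" "(mH::'a mat3) \<in> mpart 1" "(mE12::'a mat3) \<in> mpart 1"
  "(ma::'a mat3) \<in> mpart 2" "(mb::'a mat3) \<in> mpart 2" "(mzero::'a mat3) \<in> mpart t"
  unfolding mpart_def meven_def modd_def in3_def mstar_def mneg_def mdefs mzero_def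
  by (auto simp: fun_eq_iff)

lemma fst_cell: "fst (cell L x) = fst (blockof L x)"
  unfolding cell_def by (simp split: prod.split)

lemma ysym_lin:
  fixes c :: "(nat \<Rightarrow> nat) \<Rightarrow> 'a::comm_ring_1"
  assumes c: "c \<in> Pml (totaln L)"
  shows "ysym L c \<tau> = (\<Sum>\<sigma>\<in>{\<sigma>. \<sigma> permutes {..<totaln L}}. c \<sigma> * ysym L (\<lambda>\<rho>. if \<rho> = \<sigma> then 1 else 0) \<tau>)"
proof -
  let ?P = "{\<sigma>. \<sigma> permutes {..<totaln L}}"
  have fP: "finite ?P" using finite_permutations by blast
  have dec: "\<And>\<rho>. c \<rho> = (\<Sum>\<sigma>\<in>?P. c \<sigma> * (if \<rho> = \<sigma> then 1 else 0))"
  proof -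
    fix \<rho>
    have "(\<Sum>\<sigma>\<in>?P. c \<sigma> * (if \<rho> = \<sigma> then 1 else 0)) = (\<Sum>\<sigma>\<in>?P. if \<rho> = \<sigma> then c \<sigma> else 0)"
      by (rule sum.cong) auto
    also have "\<dots> = (if \<rho> \<in> ?P then c \<rho> else 0)" using fP by (simp add: sum.delta)
    also have "\<dots> = c \<rho>" using c unfolding Pml_def by auto
    finally show "c \<rho> = (\<Sum>\<sigma>\<in>?P. c \<sigma> * (if \<rho> = \<sigma> then 1 else 0))" by simp
  qed
  have "ysym L c \<tau> = (\<Sum>p\<in>rowgrp L. \<Sum>q\<in>colgrp L. of_int (sign q) *
      (\<Sum>\<sigma>\<in>?P. c \<sigma> * (if inv (p \<circ> q) \<circ> \<tau> = \<sigma> then 1 else 0)))"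
    unfolding ysym_def pact_def by (subst dec) simp
  also have "\<dots> = (\<Sum>\<sigma>\<in>?P. c \<sigma> * ysym L (\<lambda>\<rho>. if \<rho> = \<sigma> then 1 else 0) \<tau>)"
    unfolding ysym_def pact_def
    by (simp add: sum_distrib_left mult.left_commute sum.swap[of _ ?P])
  finally show ?thesis .
qed

lemma evf_lin:
  fixes c :: "(nat \<Rightarrow> nat) \<Rightarrow> 'a::field"
  assumes c: "c \<in> Pml (totaln L)"
  shows "evf L (ysym L c) = (\<Sum>\<sigma>\<in>{\<sigma>. \<sigma> permutes {..<totaln L}}. scl (c \<sigma>) (evf L (ysym L (\<lambda>\<rho>. if \<rho> = \<sigma> then 1 else 0))))"
proof (rule ext, rule ext, rule ext)
  fix s i j
  let ?P = "{\<sigma>. \<sigma> permutes {..<totaln L}}"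
  have rhs: "(\<Sum>\<sigma>\<in>?P. scl (c \<sigma>) (evf L (ysym L (\<lambda>\<rho>. if \<rho> = \<sigma> then 1 else 0)))) s i j
      = (\<Sum>\<sigma>\<in>?P. c \<sigma> * evf L (ysym L (\<lambda>\<rho>. if \<rho> = \<sigma> then 1 else 0)) s i j)"
    by (simp add: sum_fun_apply scl_def)
  show "evf L (ysym L c) s i j = (\<Sum>\<sigma>\<in>?P. scl (c \<sigma>) (evf L (ysym L (\<lambda>\<rho>. if \<rho> = \<sigma> then 1 else 0)))) s i j"
  proof (cases "adm L s")
    case False
    show ?thesis by (simp only: rhs) (simp add: evf_def False mzero_def)
  next
    case True
    have "evf L (ysym L c) s i j = (\<Sum>\<tau>\<in>?P. (\<Sum>\<sigma>\<in>?P. c \<sigma> * ysym L (\<lambda>\<rho>. if \<rho> = \<sigma> then 1 else 0) \<tau>) * monoval (totaln L) s \<tau> i j)"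
      unfolding evf_def evalp_def using True ysym_lin[OF c] by simp
    also have "\<dots> = (\<Sum>\<tau>\<in>?P. \<Sum>\<sigma>\<in>?P. c \<sigma> * (ysym L (\<lambda>\<rho>. if \<rho> = \<sigma> then 1 else 0) \<tau> * monoval (totaln L) s \<tau> i j))"
      by (simp add: sum_distrib_right mult.assoc)
    also have "\<dots> = (\<Sum>\<sigma>\<in>?P. \<Sum>\<tau>\<in>?P. c \<sigma> * (ysym L (\<lambda>\<rho>. if \<rho> = \<sigma> then 1 else 0) \<tau> * monoval (totaln L) s \<tau> i j))"
      by (rule sum.swap)
    also have "\<dots> = (\<Sum>\<sigma>\<in>?P. c \<sigma> * evf L (ysym L (\<lambda>\<rho>. if \<rho> = \<sigma> then 1 else 0)) s i j)"
      unfolding evf_def evalp_def using True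
      by (simp add: sum_distrib_left)
    finally show ?thesis by (simp only: rhs)
  qed
qed

datatype desc = DR nat nat | DP nat nat nat

lemma Pc_in_tvars: "Pc x \<in> set toks \<Longrightarrow> x \<in> set (concat (map tvars toks))"
  by force

lemma pieces_set:
  "distinct (concat (map tvars toks)) \<Longrightarrow>
   set (concat (map tvars toks)) - set (concat (map rvars toks)) = {x. Pc x \<in> set toks}"
proof (induction toks)
  case (Cons t toks)
  then show ?case using rvars_sub[of toks] Pc_in_tvars[of _ toks] by (cases t) auto
qed simp

context
  fixes a1 a2 g1 g2 g3 w1 w2 :: nat
begin

definition LL :: "nat list list" where
  "LL = [[a1 + a2, a2], [g1 + g2 + g3, g2 + g3, g3], [w1 + w2, w2], []]"

definition nn :: nat where
  "nn = a1 + 2 * a2 + (g1 + 2 * g2 + 3 * g3) + (w1 + 2 * w2)"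

definition height :: "nat \<Rightarrow> nat \<Rightarrow> nat" where
  "height b j = (if b = 0 then (if j < a2 then 2 else if j < a1 + a2 then 1 else 0)
     else if b = 1 then (if j < g3 then 3 else if j < g2 + g3 then 2 else if j < g1 + g2 + g3 then 1 else 0)
     else if b = 2 then (if j < w2 then 2 else if j < w1 + w2 then 1 else 0) else 0)"

definition idx :: "nat \<Rightarrow> nat \<Rightarrow> nat \<Rightarrow> nat" where
  "idx b r j = (if b = 0 then (if r = 0 then j else a1 + a2 + j)
     else if b = 1 then a1 + 2 * a2 + (if r = 0 then 0 else if r = 1 then g1 + g2 + g3 else g1 + 2 * g2 + 2 * g3) + j
     else a1 + 2 * a2 + (g1 + 2 * g2 + 3 * g3) + (if r = 0 then 0 else w1 + w2) + j)"

definition valid :: "nat \<Rightarrow> nat \<Rightarrow> nat \<Rightarrow> bool" where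
  "valid b r j \<longleftrightarrow> b < 3 \<and> r < height b j"

lemma totaln_LL: "totaln LL = nn"
  unfolding totaln_def LL_def nn_def by simp

lemma idx_lt: "valid b r j \<Longrightarrow> idx b r j < nn"
  unfolding valid_def height_def idx_def nn_def by (auto split: if_splits)

lemma cell00: "j < a1 + a2 \<Longrightarrow> cell LL j = (0, 0, j)"
  unfolding cell_def LL_def by simp

lemma cell01: "j < a2 \<Longrightarrow> cell LL (a1 + a2 + j) = (0, 1, j)"
  unfolding cell_def LL_def by simp

lemma cell10: "j < g1 + g2 + g3 \<Longrightarrow> cell LL (a1 + 2 * a2 + j) = (1, 0, j)"
  unfolding cell_def LL_def by simp

lemma cell11: "j < g2 + g3 \<Longrightarrow> cell LL (a1 + 2 * a2 + (g1 + g2 + g3) + j) = (1, 1, j)"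
  unfolding cell_def LL_def by simp

lemma cell12: "j < g3 \<Longrightarrow> cell LL (a1 + 2 * a2 + (g1 + 2 * g2 + 2 * g3) + j) = (1, 2, j)"
  unfolding cell_def LL_def by simp

lemma cell20: "j < w1 + w2 \<Longrightarrow> cell LL (a1 + 2 * a2 + (g1 + 2 * g2 + 3 * g3) + j) = (2, 0, j)"
  unfolding cell_def LL_def by simp

lemma cell21: "j < w2 \<Longrightarrow> cell LL (a1 + 2 * a2 + (g1 + 2 * g2 + 3 * g3) + (w1 + w2) + j) = (2, 1, j)"
  unfolding cell_def LL_def by simp

lemma height_le: "height b j \<le> 3" "b \<noteq> 1 \<Longrightarrow> height b j \<le> 2"
  unfolding height_def by auto

lemma cell_idx:
  assumes v: "valid b r j"
  shows "cell LL (idx b r j) = (b, r, j)"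
proof -
  have b: "b = 0 \<or> b = 1 \<or> b = 2" using v unfolding valid_def by auto
  have r3: "r < 3" using v height_le(1)[of b j] unfolding valid_def by linarith
  then have r: "r = 0 \<or> r = 1 \<or> r = 2" by auto
  show ?thesis
  proof -
    { assume "b = 0" "r = 0"
      then have ?thesis using v unfolding valid_def height_def idx_def
        by (auto simp: cell00 split: if_splits) }
    moreover
    { assume "b = 0" "r = 1"
      then have ?thesis using v unfolding valid_def height_def idx_def
        by (auto simp: cell01 split: if_splits) }
    moreover
    { assume "b = 0" "r = 2"
      then have False using v unfolding valid_def height_def by (auto split: if_splits) }
    moreover
    { assume "b = 1" "r = 0"
      then have ?thesis using v unfolding valid_def height_def idx_def
        by (auto simp: cell10 split: if_splits) }
    moreover
    { assume "b = 1" "r = 1"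
      then have ?thesis using v unfolding valid_def height_def idx_def
        by (auto simp: cell11 split: if_splits) }
    moreover
    { assume "b = 1" "r = 2"
      then have ?thesis using v unfolding valid_def height_def idx_def
        by (auto simp: cell12 split: if_splits) }
    moreover
    { assume "b = 2" "r = 0"
      then have ?thesis using v unfolding valid_def height_def idx_def
        by (auto simp: cell20 split: if_splits) }
    moreover
    { assume "b = 2" "r = 1"
      then have ?thesis using v unfolding valid_def height_def idx_def
        by (auto simp: cell21 split: if_splits) }
    moreover
    { assume "b = 2" "r = 2"
      then have False using v unfolding valid_def height_def by (auto split: if_splits) }
    ultimately show ?thesis using b r by blast
  qed
qed

lemma idx_surj:
  assumes x: "x < nn"
  shows "\<exists>b r j. valid b r j \<and> x = idx b r j"
proof -
  let ?n1 = "a1 + 2 * a2" and ?n2 = "g1 + 2 * g2 + 3 * g3"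
  consider "x < a1 + a2" | "a1 + a2 \<le> x" "x < ?n1"
    | "?n1 \<le> x" "x < ?n1 + (g1 + g2 + g3)"
    | "?n1 + (g1 + g2 + g3) \<le> x" "x < ?n1 + (g1 + 2 * g2 + 2 * g3)"
    | "?n1 + (g1 + 2 * g2 + 2 * g3) \<le> x" "x < ?n1 + ?n2"
    | "?n1 + ?n2 \<le> x" "x < ?n1 + ?n2 + (w1 + w2)"
    | "?n1 + ?n2 + (w1 + w2) \<le> x"
    by linarith
  then show ?thesis
  proof cases
    case 1
    then show ?thesis unfolding valid_def height_def idx_def
      by (intro exI[of _ 0] exI[of _ 0] exI[of _ x]) auto
  next
    case 2
    then show ?thesis unfolding valid_def height_def idx_def
      by (intro exI[of _ 0] exI[of _ 1] exI[of _ "x - (a1 + a2)"]) auto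
  next
    case 3
    then show ?thesis unfolding valid_def height_def idx_def
      by (intro exI[of _ 1] exI[of _ 0] exI[of _ "x - ?n1"]) auto
  next
    case 4
    then show ?thesis unfolding valid_def height_def idx_def
      by (intro exI[of _ 1] exI[of _ 1] exI[of _ "x - ?n1 - (g1 + g2 + g3)"]) auto
  next
    case 5
    then show ?thesis using x unfolding valid_def height_def idx_def nn_def
      by (intro exI[of _ 1] exI[of _ 2] exI[of _ "x - ?n1 - (g1 + 2 * g2 + 2 * g3)"]) auto
  next
    case 6
    then show ?thesis unfolding valid_def height_def idx_def
      by (intro exI[of _ 2] exI[of _ 0] exI[of _ "x - ?n1 - ?n2"]) auto
  next
    case 7
    then show ?thesis using x unfolding valid_def height_def idx_def nn_def
      by (intro exI[of _ 2] exI[of _ 1] exI[of _ "x - ?n1 - ?n2 - (w1 + w2)"]) auto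
  qed
qed

definition colL :: "nat \<Rightarrow> nat \<times> nat" where
  "colL x = (fst (cell LL x), snd (snd (cell LL x)))"

definition colks :: "nat \<Rightarrow> nat \<Rightarrow> nat list" where
  "colks b j = map (\<lambda>r. idx b r j) [0..<height b j]"

lemma colL_idx: "valid b r j \<Longrightarrow> colL (idx b r j) = (b, j)"
  unfolding colL_def using cell_idx by simp

lemma fiber:
  assumes b: "b < 3"
  shows "{x\<in>{..<nn}. colL x = (b, j)} = set (colks b j)"
proof
  show "{x \<in> {..<nn}. colL x = (b, j)} \<subseteq> set (colks b j)"
  proof
    fix x assume x: "x \<in> {x \<in> {..<nn}. colL x = (b, j)}"
    then obtain b' r' j' where v: "valid b' r' j'" and xe: "x = idx b' r' j'"
      using idx_surj by blast
    then have "(b', j') = (b, j)" using x colL_idx by auto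
    then show "x \<in> set (colks b j)" using v xe unfolding colks_def valid_def by auto
  qed
  show "set (colks b j) \<subseteq> {x \<in> {..<nn}. colL x = (b, j)}"
  proof
    fix x assume "x \<in> set (colks b j)"
    then obtain r where r: "r < height b j" "x = idx b r j" unfolding colks_def by auto
    then have "valid b r j" using b unfolding valid_def by auto
    then show "x \<in> {x \<in> {..<nn}. colL x = (b, j)}" using r idx_lt colL_idx by auto
  qed
qed

definition RM :: "nat \<Rightarrow> nat \<Rightarrow> 'a::comm_ring_1 mat3" where
  "RM b r = (if b = 0 then (if r = 0 then mE00 else if r = 1 then mD else mzero)
     else if b = 1 then (if r = 0 then mJ else if r = 1 then mH else if r = 2 then mE12 else mzero)
     else if b = 2 then (if r = 0 then ma else if r = 1 then mb else mzero) else mzero)"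

definition s0 :: "nat \<Rightarrow> 'a::comm_ring_1 mat3" where
  "s0 x = RM (fst (cell LL x)) (fst (snd (cell LL x)))"

lemma s0_idx: "valid b r j \<Longrightarrow> s0 (idx b r j) = RM b r"
  unfolding s0_def using cell_idx by simp

lemma in3_RM: "in3 (RM b r)"
  unfolding RM_def using in3_concrete by auto

lemma in3_s0: "in3 (s0 x)"
  unfolding s0_def by (rule in3_RM)

lemma idx_inj: "valid b r j \<Longrightarrow> valid b' r' j' \<Longrightarrow> idx b r j = idx b' r' j' \<Longrightarrow> (b, r, j) = (b', r', j')"
  using cell_idx by metis

lemma colks_3: "j < g3 \<Longrightarrow> colks 1 j = [idx 1 0 j, idx 1 1 j, idx 1 2 j]"
  unfolding colks_def height_def by (simp add: numeral_3_eq_3 numeral_2_eq_2 upt_rec)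

lemma colks_2y: "g3 \<le> j \<Longrightarrow> j < g2 + g3 \<Longrightarrow> colks 1 j = [idx 1 0 j, idx 1 1 j]"
  unfolding colks_def height_def by (simp add: numeral_2_eq_2 upt_rec)

lemma colks_1y: "g2 + g3 \<le> j \<Longrightarrow> j < g1 + g2 + g3 \<Longrightarrow> colks 1 j = [idx 1 0 j]"
  unfolding colks_def height_def by (simp add: upt_rec)

lemma colks_2z: "j < w2 \<Longrightarrow> colks 2 j = [idx 2 0 j, idx 2 1 j]"
  unfolding colks_def height_def by (simp add: numeral_2_eq_2 upt_rec)

lemma colks_1z: "w2 \<le> j \<Longrightarrow> j < w1 + w2 \<Longrightarrow> colks 2 j = [idx 2 0 j]"
  unfolding colks_def height_def by (simp add: upt_rec)

lemma colks_1x: "a2 \<le> j \<Longrightarrow> j < a1 + a2 \<Longrightarrow> colks 0 j = [idx 0 0 j]"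
  unfolding colks_def height_def by (simp add: upt_rec)

lemma valid_simps:
  "valid 1 r j \<longleftrightarrow> r < height 1 j" "valid 0 r j \<longleftrightarrow> r < height 0 j" "valid 2 r j \<longleftrightarrow> r < height 2 j"
  unfolding valid_def by auto

lemma idx_ne: "valid b r j \<Longrightarrow> valid b r' j \<Longrightarrow> r \<noteq> r' \<Longrightarrow> idx b r j \<noteq> idx b r' j"
  using idx_inj by blast

lemma St_col3: "j < g3 \<Longrightarrow> St s0 (colks 1 j) = (st3 mJ mH mE12 :: 'a::comm_ring_1 mat3)"
proof -
  assume j: "j < g3"
  have v: "valid 1 0 j" "valid 1 1 j" "valid 1 2 j" using j unfolding valid_def height_def by auto
  have d: "distinct [idx 1 0 j, idx 1 1 j, idx 1 2 j]" using idx_ne v by auto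
  show ?thesis using St_3[of "idx 1 0 j" "idx 1 1 j" "idx 1 2 j" "s0 :: nat \<Rightarrow> 'a mat3", OF d in3_s0 in3_s0 in3_s0] colks_3[OF j] s0_idx[OF v(1), where 'a='a] s0_idx[OF v(2), where 'a='a] s0_idx[OF v(3), where 'a='a]
    by (simp add: RM_def)
qed

lemma St_col2y: "g3 \<le> j \<Longrightarrow> j < g2 + g3 \<Longrightarrow> St s0 (colks 1 j) = (comm mJ mH :: 'a::comm_ring_1 mat3)"
proof -
  assume j: "g3 \<le> j" "j < g2 + g3"
  have v: "valid 1 0 j" "valid 1 1 j" using j unfolding valid_def height_def by auto
  have d: "idx 1 0 j \<noteq> idx 1 1 j" using idx_ne v by auto
  show ?thesis using St_2[of "idx 1 0 j" "idx 1 1 j" "s0 :: nat \<Rightarrow> 'a mat3", OF d in3_s0 in3_s0] colks_2y[OF j] s0_idx[OF v(1), where 'a='a] s0_idx[OF v(2), where 'a='a]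
    by (simp add: RM_def)
qed

lemma St_col1y: "g2 + g3 \<le> j \<Longrightarrow> j < g1 + g2 + g3 \<Longrightarrow> St s0 (colks 1 j) = (mJ :: 'a::comm_ring_1 mat3)"
proof -
  assume j: "g2 + g3 \<le> j" "j < g1 + g2 + g3"
  have v: "valid 1 0 j" using j unfolding valid_def height_def by auto
  show ?thesis using St_1[of "s0 :: nat \<Rightarrow> 'a mat3" "idx 1 0 j", OF in3_s0] colks_1y[OF j] s0_idx[OF v, where 'a='a]
    by (simp add: RM_def)
qed

lemma St_col2z: "j < w2 \<Longrightarrow> St s0 (colks 2 j) = (comm ma mb :: 'a::comm_ring_1 mat3)"
proof -
  assume j: "j < w2"
  have v: "valid 2 0 j" "valid 2 1 j" using j unfolding valid_def height_def by auto
  have d: "idx 2 0 j \<noteq> idx 2 1 j" using idx_ne v by auto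
  show ?thesis using St_2[of "idx 2 0 j" "idx 2 1 j" "s0 :: nat \<Rightarrow> 'a mat3", OF d in3_s0 in3_s0] colks_2z[OF j] s0_idx[OF v(1), where 'a='a] s0_idx[OF v(2), where 'a='a]
    by (simp add: RM_def)
qed

lemma St_col1z: "w2 \<le> j \<Longrightarrow> j < w1 + w2 \<Longrightarrow> St s0 (colks 2 j) = (ma :: 'a::comm_ring_1 mat3)"
proof -
  assume j: "w2 \<le> j" "j < w1 + w2"
  have v: "valid 2 0 j" using j unfolding valid_def height_def by auto
  show ?thesis using St_1[of "s0 :: nat \<Rightarrow> 'a mat3" "idx 2 0 j", OF in3_s0] colks_1z[OF j] s0_idx[OF v, where 'a='a]
    by (simp add: RM_def)
qed

lemma St_col1x: "a2 \<le> j \<Longrightarrow> j < a1 + a2 \<Longrightarrow> St s0 (colks 0 j) = (mE00 :: 'a::comm_ring_1 mat3)"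
proof -
  assume j: "a2 \<le> j" "j < a1 + a2"
  have v: "valid 0 0 j" using j unfolding valid_def height_def by auto
  show ?thesis using St_1[of "s0 :: nat \<Rightarrow> 'a mat3" "idx 0 0 j", OF in3_s0] colks_1x[OF j] s0_idx[OF v, where 'a='a]
    by (simp add: RM_def)
qed

fun mk :: "desc \<Rightarrow> tok" where
  "mk (DR b j) = Run (colks b j)"
| "mk (DP b r j) = Pc (idx b r j)"

fun trip :: "desc \<Rightarrow> (nat \<times> nat \<times> nat) list" where
  "trip (DR b j) = map (\<lambda>r. (b, r, j)) [0..<height b j]"
| "trip (DP b r j) = [(b, r, j)]"

definition idx3 :: "nat \<times> nat \<times> nat \<Rightarrow> nat" where
  "idx3 t = idx (fst t) (fst (snd t)) (snd (snd t))"

definition Vt :: "(nat \<times> nat \<times> nat) set" where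
  "Vt = {(b, r, j). valid b r j}"

lemma tvars_mk: "tvars (mk d) = map idx3 (trip d)"
  by (cases d) (simp_all add: colks_def idx3_def)

lemma ws_eq: "concat (map tvars (map mk ds)) = map idx3 (concat (map trip ds))"
  by (induction ds) (simp_all add: tvars_mk)

lemma ws_perm:
  assumes d: "distinct (concat (map trip ds))" and st: "set (concat (map trip ds)) = Vt"
  shows "distinct (concat (map tvars (map mk ds)))" "set (concat (map tvars (map mk ds))) = {..<nn}"
proof -
  have inj: "inj_on idx3 Vt"
    unfolding Vt_def idx3_def by (rule inj_onI) (use idx_inj in auto)
  show "distinct (concat (map tvars (map mk ds)))"
    unfolding ws_eq using d st inj by (simp add: distinct_map)
  have "idx3 ` Vt = {..<nn}"
  proof
    show "idx3 ` Vt \<subseteq> {..<nn}" unfolding Vt_def idx3_def using idx_lt by auto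
    show "{..<nn} \<subseteq> idx3 ` Vt"
    proof
      fix x assume "x \<in> {..<nn}"
      then obtain b r j where "valid b r j" "x = idx b r j" using idx_surj by blast
      then show "x \<in> idx3 ` Vt" unfolding Vt_def idx3_def by (auto intro!: image_eqI[of _ _ "(b, r, j)"])
    qed
  qed
  then show "set (concat (map tvars (map mk ds))) = {..<nn}"
    unfolding ws_eq using st by simp
qed

definition dok :: "desc \<Rightarrow> bool" where
  "dok d = (case d of DR b j \<Rightarrow> b < 3 \<and> 0 < height b j | DP b r j \<Rightarrow> True)"

lemma runs_ok:
  assumes "\<forall>d\<in>set ds. dok d"
  shows "\<forall>ks. Run ks \<in> set (map mk ds) \<longrightarrow> ks \<noteq> [] \<and> set ks = {x\<in>{..<nn}. colL x = colL (hd ks)}"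
proof (intro allI impI)
  fix ks assume "Run ks \<in> set (map mk ds)"
  then obtain d where d: "d \<in> set ds" "mk d = Run ks" by auto
  obtain b j where dj: "d = DR b j" using d(2) by (cases d) auto
  then have bj: "b < 3" "0 < height b j" using assms d unfolding dok_def by auto
  have ks: "ks = colks b j" using d dj by simp
  have hd: "hd ks = idx b 0 j" using ks bj unfolding colks_def by (simp add: upt_conv_Cons)
  have v: "valid b 0 j" using bj unfolding valid_def by auto
  show "ks \<noteq> [] \<and> set ks = {x\<in>{..<nn}. colL x = colL (hd ks)}"
    using ks bj hd colL_idx[OF v] fiber[OF bj(1), of j] unfolding colks_def by auto
qed

lemma set_trip_DR: "set (concat (map trip (map (DR b) js))) = {(b, r, j) | r j. j \<in> set js \<and> r < height b j}"
  by auto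

lemma distinct_trip_DR: "distinct js \<Longrightarrow> distinct (concat (map trip (map (DR b) js)))"
  by (induction js) (auto simp: distinct_map inj_on_def)

lemma distinct_trip_DR': "distinct js \<Longrightarrow> distinct (concat (map (trip \<circ> DR b) js))"
  using distinct_trip_DR by simp

lemma dok_simps[simp]: "dok (DR b j) = (b < 3 \<and> 0 < height b j)" "dok (DP b r j) = True"
  unfolding dok_def by auto

lemma hpos: "j < a1 + a2 \<Longrightarrow> 0 < height 0 j" "j < g1 + g2 + g3 \<Longrightarrow> 0 < height 1 j"
  "j < w1 + w2 \<Longrightarrow> 0 < height 2 j"
  unfolding height_def by auto

lemma set_trip_DP: "set (concat (map trip (map (DP b r) js))) = {(b, r, j) | j. j \<in> set js}"
  by auto

lemma distinct_trip_DP: "distinct js \<Longrightarrow> distinct (concat (map trip (map (DP b r) js)))"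
  by (induction js) auto

definition eA :: nat where "eA = (w1 - 1) div 2"

definition rblock :: "nat \<Rightarrow> desc list" where
  "rblock i = [DR 2 (w2 + 2 * i + 1), DR 1 (g3 + i), DR 2 (w2 + 2 * i + 2)]"

definition restA :: "desc list" where
  "restA = concat (map rblock [0..<eA]) @ (if odd (w1 - 1) then [DR 2 (w2 + (w1 - 1))] else [])"

definition midA :: "desc list" where
  "midA = map (DR 1) [g3 + eA..<g1 + g2 + g3] @ map (DR 1) [0..<g3] @ map (DR 2) [0..<w2] @ [DR 2 w2]"

definition postA :: "desc list" where
  "postA = map (DR 0) [a2..<a1 + a2] @ restA"

definition dsA :: "desc list" where
  "dsA = map (DP 0 1) [0..<a2] @ midA @ map (DP 0 0) [0..<a2] @ postA"

lemma eA_le: "2 * eA \<le> w1 - 1"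
  unfolding eA_def by simp

lemma rblock_core:
  assumes "e \<le> eA"
  shows "set (concat (map trip (concat (map rblock [0..<e]))))
           = {(2, 0, j) | j. w2 < j \<and> j \<le> w2 + 2 * e} \<union> {(1, r, j) | r j. g3 \<le> j \<and> j < g3 + e \<and> r < height 1 j}
       \<and> distinct (concat (map trip (concat (map rblock [0..<e]))))"
  using assms
proof (induction e)
  case 0
  then show ?case by auto
next
  case (Suc e)
  have e2: "2 * e + 2 < w1" using Suc.prems eA_le by linarith
  have h1: "height 2 (w2 + 2 * e + 1) = 1" "height 2 (w2 + 2 * e + 2) = 1"
    using e2 unfolding height_def by auto
  have tb: "concat (map trip (rblock e)) = [(2, 0, w2 + 2 * e + 1)] @ map (\<lambda>r. (1, r, g3 + e)) [0..<height 1 (g3 + e)] @ [(2, 0, w2 + 2 * e + 2)]"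
    unfolding rblock_def using h1 by simp
  have IH: "set (concat (map trip (concat (map rblock [0..<e]))))
           = {(2, 0, j) | j. w2 < j \<and> j \<le> w2 + 2 * e} \<union> {(1, r, j) | r j. g3 \<le> j \<and> j < g3 + e \<and> r < height 1 j}"
    "distinct (concat (map trip (concat (map rblock [0..<e]))))"
    using Suc by auto
  have eq: "concat (map trip (concat (map rblock [0..<Suc e]))) = concat (map trip (concat (map rblock [0..<e]))) @ concat (map trip (rblock e))"
    by simp
  have sb: "set (concat (map trip (rblock e))) = {(2, 0, w2 + 2 * e + 1), (2, 0, w2 + 2 * e + 2)} \<union> {(1, r, g3 + e) | r. r < height 1 (g3 + e)}"
    unfolding tb by auto
  have db: "distinct (concat (map trip (rblock e)))"
    unfolding tb by (auto simp: distinct_map inj_on_def)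
  have s1: "{(2::nat, 0::nat, j) | j. w2 < j \<and> j \<le> w2 + 2 * Suc e} = {(2, 0, j) | j. w2 < j \<and> j \<le> w2 + 2 * e} \<union> {(2, 0, w2 + 2 * e + 1), (2, 0, w2 + 2 * e + 2)}"
    by auto
  have s2: "{(1::nat, r, j) | r j. g3 \<le> j \<and> j < g3 + Suc e \<and> r < height 1 j} = {(1, r, j) | r j. g3 \<le> j \<and> j < g3 + e \<and> r < height 1 j} \<union> {(1, r, g3 + e) | r. r < height 1 (g3 + e)}"
    by (auto simp: less_Suc_eq)
  have disj: "set (concat (map trip (concat (map rblock [0..<e])))) \<inter> set (concat (map trip (rblock e))) = {}"
    unfolding IH(1) sb by auto
  show ?case
    unfolding eq set_append distinct_append IH(1) sb s1 s2 using IH(2) db by (simp add: Un_ac) auto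
qed

lemma restA_trip:
  assumes "1 \<le> w1"
  shows "set (concat (map trip restA))
           = {(2, 0, j) | j. w2 < j \<and> j < w1 + w2} \<union> {(1, r, j) | r j. g3 \<le> j \<and> j < g3 + eA \<and> r < height 1 j}
       \<and> distinct (concat (map trip restA))"
proof -
  have c: "set (concat (map trip (concat (map rblock [0..<eA]))))
           = {(2, 0, j) | j. w2 < j \<and> j \<le> w2 + 2 * eA} \<union> {(1, r, j) | r j. g3 \<le> j \<and> j < g3 + eA \<and> r < height 1 j}"
     "distinct (concat (map trip (concat (map rblock [0..<eA]))))"
    using rblock_core[of eA] by (simp, simp)
  show ?thesis
  proof (cases "odd (w1 - 1)")
    case True
    then have e: "2 * eA + 1 = w1 - 1" unfolding eA_def by presburger
    have h: "height 2 (w2 + (w1 - 1)) = 1" using assms unfolding height_def by auto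
    show ?thesis unfolding restA_def using True c e h assms by (auto simp: le_Suc_eq)
  next
    case False
    then have e: "2 * eA = w1 - 1" unfolding eA_def by presburger
    show ?thesis unfolding restA_def using False c e assms by auto
  qed
qed

lemma dsA_dok:
  assumes hw: "1 \<le> w1" and he: "eA \<le> g1 + g2"
  shows "\<forall>d\<in>set dsA. dok d"
proof -
  have e2: "2 * eA \<le> w1 - 1" by (rule eA_le)
  have r: "\<forall>d\<in>set restA. dok d"
    unfolding restA_def rblock_def using hw he e2 hpos by auto
  have m: "\<forall>d\<in>set midA. dok d"
    unfolding midA_def using hw hpos by auto
  have p: "\<forall>d\<in>set postA. dok d"
    unfolding postA_def using r hpos by auto
  show ?thesis
    unfolding dsA_def using m p by auto
qed

lemma dsA_trip:
  assumes hw: "1 \<le> w1" and he: "eA \<le> g1 + g2"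
  shows "distinct (concat (map trip dsA)) \<and> set (concat (map trip dsA)) = Vt"
proof -
  have R: "set (concat (map trip restA))
           = {(2, 0, j) | j. w2 < j \<and> j < w1 + w2} \<union> {(1, r, j) | r j. g3 \<le> j \<and> j < g3 + eA \<and> r < height 1 j}"
     "distinct (concat (map trip restA))"
    using restA_trip[OF hw] by simp_all
  have hw2: "height 2 w2 = 1" using hw unfolding height_def by auto
  let ?B = "{(0::nat, 1::nat, j) | j. j < a2}"
  let ?T = "{(0::nat, 0::nat, j) | j. j < a2}"
  let ?X = "{(0::nat, r, j) | r j. a2 \<le> j \<and> j < a1 + a2 \<and> r < height 0 j}"
  let ?Y1 = "{(1::nat, r, j) | r j. g3 + eA \<le> j \<and> j < g1 + g2 + g3 \<and> r < height 1 j}"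
  let ?Y3 = "{(1::nat, r, j) | r j. j < g3 \<and> r < height 1 j}"
  let ?Z2 = "{(2::nat, r, j) | r j. j < w2 \<and> r < height 2 j}"
  have sm: "set (concat (map trip midA)) = ?Y1 \<union> ?Y3 \<union> ?Z2 \<union> {(2, 0, w2)}"
    unfolding midA_def using hw2 by auto
  have dm: "distinct (concat (map trip midA))"
    unfolding midA_def using hw2 by (auto simp: distinct_trip_DR')
  have sp: "set (concat (map trip postA)) = ?X \<union> set (concat (map trip restA))"
    unfolding postA_def by auto
  have dp: "distinct (concat (map trip postA))"
    unfolding postA_def using R by (auto simp: distinct_trip_DR')
  have sA: "set (concat (map trip dsA)) = ?B \<union> (?Y1 \<union> ?Y3 \<union> ?Z2 \<union> {(2, 0, w2)}) \<union> ?T \<union> (?X \<union> set (concat (map trip restA)))"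
    unfolding dsA_def using sm sp by auto
  have dA: "distinct (concat (map trip dsA))"
  proof -
    have e: "concat (map trip dsA) = concat (map trip (map (DP 0 1) [0..<a2])) @ concat (map trip midA)
        @ concat (map trip (map (DP 0 0) [0..<a2])) @ concat (map trip postA)"
      unfolding dsA_def by simp
    have sB: "set (concat (map trip (map (DP 0 1) [0..<a2]))) = ?B" by (simp only: set_trip_DP) auto
    have sT: "set (concat (map trip (map (DP 0 0) [0..<a2]))) = ?T" by (simp only: set_trip_DP) auto
    have d1: "distinct (concat (map trip (map (DP 0 1) [0..<a2])))" "distinct (concat (map trip (map (DP 0 0) [0..<a2])))"
      by (simp_all only: distinct_trip_DP distinct_upt)
    have i1: "?B \<inter> (?Y1 \<union> ?Y3 \<union> ?Z2 \<union> {(2, 0, w2)}) = {}" by auto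
    have i2: "?B \<inter> ?T = {}" by auto
    have i3: "?B \<inter> (?X \<union> set (concat (map trip restA))) = {}" unfolding R(1) by auto
    have i4: "(?Y1 \<union> ?Y3 \<union> ?Z2 \<union> {(2, 0, w2)}) \<inter> ?T = {}" by auto
    have i5: "(?Y1 \<union> ?Y3 \<union> ?Z2 \<union> {(2, 0, w2)}) \<inter> (?X \<union> set (concat (map trip restA))) = {}"
      unfolding R(1) by auto
    have i6: "?T \<inter> (?X \<union> set (concat (map trip restA))) = {}" unfolding R(1) by auto
    show ?thesis unfolding e distinct_append set_append sB sT sm sp
      using d1 dm dp i1 i2 i3 i4 i5 i6 by (simp only: Int_Un_distrib Int_Un_distrib2 Un_empty simp_thms)
  qed
  have eqV: "?B \<union> (?Y1 \<union> ?Y3 \<union> ?Z2 \<union> {(2, 0, w2)}) \<union> ?T \<union> (?X \<union> set (concat (map trip restA))) = Vt"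
  proof
    show "?B \<union> (?Y1 \<union> ?Y3 \<union> ?Z2 \<union> {(2, 0, w2)}) \<union> ?T \<union> (?X \<union> set (concat (map trip restA))) \<subseteq> Vt"
    proof -
      have v1: "?B \<subseteq> Vt" "?T \<subseteq> Vt" "?X \<subseteq> Vt" "?Y1 \<subseteq> Vt" "?Y3 \<subseteq> Vt" "?Z2 \<subseteq> Vt"
        unfolding Vt_def valid_def by (auto simp: height_def)
      have v2: "(2, 0, w2) \<in> Vt" using hw2 unfolding Vt_def valid_def by auto
      have v3: "set (concat (map trip restA)) \<subseteq> Vt"
        unfolding R(1) Vt_def valid_def using hpos(3) by auto
      show ?thesis using v1 v2 v3 by (simp only: Un_subset_iff insert_subset empty_subsetI simp_thms)
    qed
    show "Vt \<subseteq> ?B \<union> (?Y1 \<union> ?Y3 \<union> ?Z2 \<union> {(2, 0, w2)}) \<union> ?T \<union> (?X \<union> set (concat (map trip restA)))"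
    proof
      fix t assume "t \<in> Vt"
      then obtain b r j where t: "t = (b, r, j)" "b < 3" "r < height b j" unfolding Vt_def valid_def by auto
      have "b = 0 \<or> b = 1 \<or> b = 2" using t by auto
      then show "t \<in> ?B \<union> (?Y1 \<union> ?Y3 \<union> ?Z2 \<union> {(2, 0, w2)}) \<union> ?T \<union> (?X \<union> set (concat (map trip restA)))"
      proof (elim disjE)
        assume b: "b = 0"
        show ?thesis
        proof (cases "j < a2")
          case True
          then have "r < 2" using t b unfolding height_def by simp
          then have "r = 0 \<or> r = 1" by auto
          then show ?thesis using t b True by auto
        next
          case False
          have "j < a1 + a2" using t b False unfolding height_def by (simp split: if_splits)
          then show ?thesis using t b False by auto
        qed
      next
        assume b: "b = 1"
        have "j < g1 + g2 + g3" using t b unfolding height_def by (simp split: if_splits)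
        then show ?thesis unfolding R(1) using t b by auto
      next
        assume b: "b = 2"
        show ?thesis
        proof (cases "j < w2")
          case True
          then show ?thesis using t b by auto
        next
          case False
          then have "r < 1" "j < w1 + w2" using t b unfolding height_def by (simp_all split: if_splits)
          then show ?thesis unfolding R(1) using t b False by (cases "j = w2") auto
        qed
      qed
    qed
  qed
  show ?thesis by (intro conjI dA) (simp only: sA eqV)
qed

lemma collapse_mk_DR: "collapse s (mk (DR b j)) = IM (St s (colks b j))"
  by simp

lemma flip_col:
  assumes "g3 \<le> j" "j < g1 + g2 + g3"
  shows "sends (St (s0::nat \<Rightarrow> 'a::field_char_0 mat3) (colks 1 j)) 1 2 \<and> sends (St (s0::nat \<Rightarrow> 'a mat3) (colks 1 j)) 2 1"
proof (cases "j < g2 + g3")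
  case True
  then show ?thesis using St_col2y[where 'a='a, OF assms(1) True] sends_concrete[where 'a='a] by simp
next
  case False
  then show ?thesis using St_col1y[where 'a='a, of j] assms sends_concrete[where 'a='a] by simp
qed

lemma mats_DR: "mats (map (collapse (s0::nat \<Rightarrow> 'a::comm_ring_1 mat3) \<circ> mk) (map (DR b) js))"
  unfolding mats_def using in3_St[of "s0::nat \<Rightarrow> 'a mat3"] in3_s0[where 'a='a] by auto

lemma mats_DRs: "\<forall>d\<in>set ds. \<exists>b j. d = DR b j \<Longrightarrow> mats (map (collapse (s0::nat \<Rightarrow> 'a::comm_ring_1 mat3) \<circ> mk) ds)"
  unfolding mats_def using in3_St[of "s0::nat \<Rightarrow> 'a mat3"] in3_s0[where 'a='a] by fastforce

lemma midA_DR: "\<forall>d\<in>set midA. \<exists>b j. d = DR b j"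
  unfolding midA_def by auto

lemma postA_DR: "\<forall>d\<in>set postA. \<exists>b j. d = DR b j"
  unfolding postA_def restA_def rblock_def by auto

lemma mid_sends:
  assumes hw: "1 \<le> w1" and he: "eA \<le> g1 + g2"
  shows "sends (prodi (s0::nat \<Rightarrow> 'a::field_char_0 mat3) id (map (collapse s0 \<circ> mk) midA))
           (if even (g1 + g2 - eA) then 2 else 1) 0"
proof -
  let ?c = "collapse (s0::nat \<Rightarrow> 'a mat3) \<circ> mk"
  let ?l1 = "map ?c (map (DR 1) [g3 + eA..<g1 + g2 + g3])"
  let ?l2 = "map ?c (map (DR 1) [0..<g3])"
  let ?l3 = "map ?c (map (DR 2) [0..<w2])"
  let ?l4 = "map ?c [DR 2 w2]"
  let ?u = "if even (g1 + g2 - eA) then 2 else 1 :: nat"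
  have e: "map ?c midA = ?l1 @ ?l2 @ ?l3 @ ?l4" unfolding midA_def by simp
  have s1: "sends (prodi s0 id ?l1) ?u 2"
  proof -
    have f: "\<forall>it\<in>set ?l1. \<exists>A. it = IM A \<and> in3 A \<and> sends A 1 2 \<and> sends A 2 1"
      using flip_col[where 'a='a] in3_St[of "s0::nat \<Rightarrow> 'a mat3"] in3_s0[where 'a='a] by auto
    have l: "length ?l1 = g1 + g2 - eA" by simp
    have uu: "?u = 1 \<or> ?u = 2" by auto
    have f2: "(if even (length ?l1) then ?u else 3 - ?u) = 2" unfolding l by auto
    have "sends (prodi s0 id ?l1) ?u (if even (length ?l1) then ?u else 3 - ?u)"
      by (rule sends_flip_list[OF f uu])
    then show ?thesis by (simp only: f2)
  qed
  have s2: "sends (prodi s0 id ?l2) 2 2"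
    by (rule sends_fix_list) (use St_col3[where 'a='a] sends_concrete[where 'a='a] in3_st3 in3_concrete in3_St[of "s0::nat \<Rightarrow> 'a mat3"] in3_s0[where 'a='a] in auto)
  have s3: "sends (prodi s0 id ?l3) 2 2"
    by (rule sends_fix_list) (use St_col2z[where 'a='a] sends_concrete[where 'a='a] in3_comm in3_concrete in3_St[of "s0::nat \<Rightarrow> 'a mat3"] in3_s0[where 'a='a] in auto)
  have s4: "sends (prodi s0 id ?l4) 2 0"
  proof -
    have "St (s0::nat \<Rightarrow> 'a mat3) (colks 2 w2) = ma" using St_col1z[where 'a='a, of w2] hw by simp
    moreover have "in3 (ma :: 'a mat3)" by (simp add: in3_concrete)
    ultimately show ?thesis using sends_concrete[where 'a='a] by (simp add: mmul_mone_right)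
  qed
  have m: "mats ?l2" "mats ?l3" "mats ?l4" "mats (?l3 @ ?l4)" "mats (?l2 @ ?l3 @ ?l4)"
    using mats_DR[of 1 "[0..<g3]"] mats_DR[of 2 "[0..<w2]"] mats_DR[of 2 "[w2]"] by (auto simp: mats_append)
  have "sends (prodi s0 id (?l3 @ ?l4)) 2 0"
    using sends_prodi_append[OF in3_prodi_mats[OF m(3)] s3 s4] .
  then have "sends (prodi s0 id (?l2 @ ?l3 @ ?l4)) 2 0"
    using sends_prodi_append[OF in3_prodi_mats[OF m(4)] s2] by blast
  then have "sends (prodi s0 id (?l1 @ ?l2 @ ?l3 @ ?l4)) ?u 0"
    using sends_prodi_append[OF in3_prodi_mats[OF m(5)] s1] by blast
  then show ?thesis unfolding e .
qed

lemma post_sends: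
  assumes hw: "1 \<le> w1" and he: "eA \<le> g1 + g2"
  shows "sends (prodi (s0::nat \<Rightarrow> 'a::field_char_0 mat3) id (map (collapse s0 \<circ> mk) postA))
           0 (if odd (w1 - 1) then 1 else 0)"
proof -
  let ?c = "collapse (s0::nat \<Rightarrow> 'a mat3) \<circ> mk"
  let ?l1 = "map ?c (map (DR 0) [a2..<a1 + a2])"
  let ?l2 = "map ?c (concat (map rblock [0..<eA]))"
  let ?l3 = "map ?c (if odd (w1 - 1) then [DR 2 (w2 + (w1 - 1))] else [])"
  have e: "map ?c postA = ?l1 @ ?l2 @ ?l3" unfolding postA_def restA_def by simp
  have e2: "2 * eA \<le> w1 - 1" by (rule eA_le)
  have ma3: "in3 (ma :: 'a mat3)" by (simp add: in3_concrete)
  have s1: "sends (prodi s0 id ?l1) 0 0"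
    by (rule sends_fix_list) (use St_col1x[where 'a='a] sends_concrete[where 'a='a] in3_concrete in3_St[of "s0::nat \<Rightarrow> 'a mat3"] in3_s0[where 'a='a] in auto)
  have s2: "sends (prodi s0 id ?l2) 0 0"
  proof -
    have eq: "?l2 = concat (map (\<lambda>i. map ?c (rblock i)) [0..<eA])" by (simp add: map_concat comp_def)
    have blk: "\<forall>b\<in>set (map (\<lambda>i. map ?c (rblock i)) [0..<eA]). mats b \<and> sends (prodi s0 id b) 0 0"
    proof
      fix b assume "b \<in> set (map (\<lambda>i. map ?c (rblock i)) [0..<eA])"
      then obtain i where i: "i < eA" "b = map ?c (rblock i)" by auto
      have a1': "St (s0::nat \<Rightarrow> 'a mat3) (colks 2 (w2 + 2 * i + 1)) = ma"
        using St_col1z[where 'a='a, of "w2 + 2 * i + 1"] i e2 by simp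
      have a2': "St (s0::nat \<Rightarrow> 'a mat3) (colks 2 (w2 + 2 * i + 2)) = ma"
        using St_col1z[where 'a='a, of "w2 + 2 * i + 2"] i e2 by simp
      have f: "sends (St (s0::nat \<Rightarrow> 'a mat3) (colks 1 (g3 + i))) 1 2"
        using flip_col[where 'a='a, of "g3 + i"] i he by simp
      have bb: "b = [IM ma, IM (St s0 (colks 1 (g3 + i))), IM ma]"
        using i a1' a2' unfolding rblock_def by simp
      have "sends (prodi s0 id b) 0 0"
        unfolding bb using sends_concrete[where 'a='a] f ma3
        by (simp add: mmul_mone_right sends_mmul)
      moreover have "mats b" unfolding bb mats_def using ma3 in3_St[of "s0::nat \<Rightarrow> 'a mat3"] in3_s0[where 'a='a] by auto
      ultimately show "mats b \<and> sends (prodi s0 id b) 0 0" by simp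
    qed
    show ?thesis unfolding eq by (rule sends_concat_list[OF blk]) simp
  qed
  have s3: "sends (prodi s0 id ?l3) 0 (if odd (w1 - 1) then 1 else 0)"
  proof (cases "odd (w1 - 1)")
    case True
    have "St (s0::nat \<Rightarrow> 'a mat3) (colks 2 (w2 + (w1 - 1))) = ma"
      using St_col1z[where 'a='a, of "w2 + (w1 - 1)"] hw by simp
    then show ?thesis using True sends_concrete[where 'a='a] ma3 by (simp add: mmul_mone_right)
  next
    case False
    then show ?thesis by (simp add: sends_mone)
  qed
  have m: "mats ?l2" "mats ?l3" "mats (?l2 @ ?l3)"
    using mats_DRs[of "concat (map rblock [0..<eA])"] mats_DRs[of "if odd (w1 - 1) then [DR 2 (w2 + (w1 - 1))] else []"]
    unfolding rblock_def by (auto simp: mats_append)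
  have "sends (prodi s0 id (?l2 @ ?l3)) 0 (if odd (w1 - 1) then 1 else 0)"
    using sends_prodi_append[OF in3_prodi_mats[OF m(2)] s2 s3] .
  then have "sends (prodi s0 id (?l1 @ ?l2 @ ?l3)) 0 (if odd (w1 - 1) then 1 else 0)"
    using sends_prodi_append[OF in3_prodi_mats[OF m(3)] s1] by blast
  then show ?thesis unfolding e .
qed

lemma expand_tvars: "expand t = map IV (tvars t)"
  by (cases t) auto

lemma map_IV_ws: "map IV (concat (map tvars toks)) = [] @ concat (map expand toks)"
  by (induction toks) (simp_all add: expand_tvars)

definition bots :: "nat list" where "bots = map (idx 0 1) [0..<a2]"
definition tops :: "nat list" where "tops = map (idx 0 0) [0..<a2]"

lemma bots_tops_basic:
  "length bots = length tops" "distinct (bots @ tops)" "length bots = a2"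
  unfolding bots_def tops_def idx_def by (auto simp: distinct_map inj_on_def)

lemma wrap_fiber:
  "\<forall>i<length bots. {x\<in>set bots \<union> set tops. colL x = colL (bots ! i)} = {bots ! i, tops ! i}"
proof (intro allI impI)
  fix i assume i: "i < length bots"
  then have ia: "i < a2" using bots_tops_basic by simp
  have v: "\<And>j. j < a2 \<Longrightarrow> valid 0 1 j \<and> valid 0 0 j" unfolding valid_def height_def by auto
  have c1: "\<And>j. j < a2 \<Longrightarrow> colL (idx 0 1 j) = (0, j)" using v colL_idx by blast
  have c0: "\<And>j. j < a2 \<Longrightarrow> colL (idx 0 0 j) = (0, j)" using v colL_idx by blast
  show "{x\<in>set bots \<union> set tops. colL x = colL (bots ! i)} = {bots ! i, tops ! i}"
    unfolding bots_def tops_def using ia c1 c0 by auto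
qed

lemma s0_bots: "\<forall>x\<in>set bots. (s0::nat \<Rightarrow> 'a::comm_ring_1 mat3) x = mD"
  and s0_tops: "\<forall>x\<in>set tops. (s0::nat \<Rightarrow> 'a::comm_ring_1 mat3) x = mE00"
proof -
  have v: "\<And>j. j < a2 \<Longrightarrow> valid 0 1 j \<and> valid 0 0 j" unfolding valid_def height_def by auto
  show "\<forall>x\<in>set bots. (s0::nat \<Rightarrow> 'a mat3) x = mD" unfolding bots_def using v s0_idx[where 'a='a] by (auto simp: RM_def)
  show "\<forall>x\<in>set tops. (s0::nat \<Rightarrow> 'a mat3) x = mE00" unfolding tops_def using v s0_idx[where 'a='a] by (auto simp: RM_def)
qed

lemma final_row:
  fixes M P :: "'a::field_char_0 mat3"
  assumes u: "u = 1 \<or> u = 2" and M: "sends M u 0" and P: "sends P 0 t"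
  shows "sends (mmul mone (mmul (W mD mE00 k M) P)) u t"
proof -
  let ?M' = "if k = 0 then M else mmul M mE00"
  have M': "sends ?M' u 0"
    using M sends_mmul[OF M, of mE00 0] sends_concrete[where 'a='a] by auto
  have r: "\<forall>l. W mD mE00 k M u l = ?M' u l" using W_row[where 'a='a, OF u] by (cases "k = 0") auto
  have "sends (mmul ?M' P) u t" using sends_mmul[OF M' P] .
  then have "sends (mmul (W mD mE00 k M) P) u t"
    using sends_row_eq[of "mmul (W mD mE00 k M) P" u "mmul ?M' P" t] mmul_row_eq[of "W mD mE00 k M" u ?M' P, OF r] by simp
  moreover have "sends (mone :: 'a mat3) u u" using u sends_mone[where 'a='a] by auto
  ultimately show ?thesis using sends_mmul by blast
qed

lemma caseA_val:
  assumes hw: "1 \<le> w1" and he: "eA \<le> g1 + g2"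
  shows "\<exists>u t. sends (val colL (s0::nat \<Rightarrow> 'a::field_char_0 mat3) {..<nn} (map IV (concat (map tvars (map mk dsA))))) u t"
proof -
  let ?toks = "map mk dsA"
  let ?N = "{..<nn}"
  let ?midI = "map (collapse (s0::nat \<Rightarrow> 'a mat3) \<circ> mk) midA"
  let ?postI = "map (collapse (s0::nat \<Rightarrow> 'a mat3) \<circ> mk) postA"
  have dt: "distinct (concat (map trip dsA))" "set (concat (map trip dsA)) = Vt"
    using dsA_trip[OF hw he] by simp_all
  have p: "distinct (concat (map tvars ?toks))" "set (concat (map tvars ?toks)) = ?N"
    using ws_perm[OF dt] by simp_all
  have v1: "val colL (s0::nat \<Rightarrow> 'a mat3) ?N ([] @ concat (map expand ?toks))
      = val colL s0 (?N - set (concat (map rvars ?toks))) ([] @ map (collapse s0) ?toks)"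
  proof (rule val_toks)
    show "finite ?N" by simp
    show "distinct (concat (map tvars ?toks))" by (rule p(1))
    show "\<forall>x\<in>set (concat (map tvars ?toks)). IV x \<notin> set []" by simp
    show "\<forall>ks. Run ks \<in> set ?toks \<longrightarrow> ks \<noteq> [] \<and> set ks = {x \<in> ?N. colL x = colL (hd ks)}"
      by (rule runs_ok[OF dsA_dok[OF hw he]])
    show "\<forall>x. in3 ((s0::nat \<Rightarrow> 'a mat3) x)" using in3_s0 by blast
  qed
  have U': "?N - set (concat (map rvars ?toks)) = set bots \<union> set tops"
  proof -
    have "?N - set (concat (map rvars ?toks)) = {x. Pc x \<in> set ?toks}"
      using pieces_set[OF p(1)] p(2) by simp
    also have "\<dots> = set bots \<union> set tops"
      using midA_DR postA_DR unfolding dsA_def bots_def tops_def by force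
    finally show ?thesis .
  qed
  have c: "map (collapse (s0::nat \<Rightarrow> 'a mat3)) ?toks = map IV bots @ ?midI @ map IV tops @ ?postI"
    unfolding dsA_def bots_def tops_def by simp
  have m: "mats ?midI" "mats ?postI" using mats_DRs midA_DR postA_DR by blast+
  have v2: "val colL (s0::nat \<Rightarrow> 'a mat3) (set bots \<union> set tops) ([] @ map IV bots @ ?midI @ map IV tops @ ?postI)
     = mmul (prodi s0 id []) (mmul (W mD mE00 (length bots) (prodi s0 id ?midI)) (prodi s0 id ?postI))"
  proof (rule val_wrap)
    show "length bots = length tops" "distinct (bots @ tops)" using bots_tops_basic by simp_all
    show "set bots \<union> set tops = set bots \<union> set tops" by simp
    show "\<forall>i<length bots. {x \<in> set bots \<union> set tops. colL x = colL (bots ! i)} = {bots ! i, tops ! i}"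
      by (rule wrap_fiber)
    show "\<forall>x\<in>set bots. (s0::nat \<Rightarrow> 'a mat3) x = mD" by (rule s0_bots)
    show "\<forall>x\<in>set tops. (s0::nat \<Rightarrow> 'a mat3) x = mE00" by (rule s0_tops)
    show "in3 (mD::'a mat3)" "in3 (mE00::'a mat3)" by (simp_all add: in3_concrete)
    show "mats ([]::'a item list)" unfolding mats_def by simp
    show "mats ?midI" "mats ?postI" by (rule m(1), rule m(2))
  qed
  let ?u = "if even (g1 + g2 - eA) then 2 else 1 :: nat"
  let ?t = "if odd (w1 - 1) then 1 else 0 :: nat"
  have "sends (mmul mone (mmul (W mD mE00 (length bots) (prodi s0 id ?midI)) (prodi s0 id ?postI))) ?u ?t"
    by (rule final_row) (use mid_sends[OF hw he] post_sends[OF hw he] in auto)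
  moreover have "val colL (s0::nat \<Rightarrow> 'a mat3) ?N (map IV (concat (map tvars ?toks)))
      = mmul mone (mmul (W mD mE00 (length bots) (prodi s0 id ?midI)) (prodi s0 id ?postI))"
  proof -
    have "val colL (s0::nat \<Rightarrow> 'a mat3) ?N (map IV (concat (map tvars ?toks)))
        = val colL s0 ?N ([] @ concat (map expand ?toks))" by (simp only: map_IV_ws)
    also have "\<dots> = val colL s0 (?N - set (concat (map rvars ?toks))) ([] @ map (collapse s0) ?toks)" by (rule v1)
    also have "\<dots> = val colL s0 (set bots \<union> set tops) ([] @ map IV bots @ ?midI @ map IV tops @ ?postI)"
      by (simp only: U' c)
    also have "\<dots> = mmul (prodi s0 id []) (mmul (W mD mE00 (length bots) (prodi s0 id ?midI)) (prodi s0 id ?postI))"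
      by (rule v2)
    finally show ?thesis by simp
  qed
  ultimately show ?thesis by auto
qed

definition restB :: "desc list" where
  "restB = map (DR 2) [1..<w2] @ map (DR 1) [g3..<g1 + g2 + g3] @ map (DR 1) [0..<g3]"

definition dsB :: "desc list" where
  "dsB = map (DP 0 1) [0..<a2] @ [DP 2 1 0] @ map (DP 0 0) [0..<a2] @ map (DR 0) [a2..<a1 + a2]
     @ [DP 2 0 0] @ restB"

lemma restB_DR: "\<forall>d\<in>set restB. \<exists>b j. d = DR b j"
  unfolding restB_def by auto

lemma dsB_dok:
  assumes "w1 = 0"
  shows "\<forall>d\<in>set dsB. dok d"
proof -
  have r: "\<forall>d\<in>set restB. dok d" unfolding restB_def using hpos by auto
  show ?thesis unfolding dsB_def using r hpos by auto
qed

lemma dsB_trip: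
  assumes w: "w1 = 0" and w2: "1 \<le> w2"
  shows "distinct (concat (map trip dsB)) \<and> set (concat (map trip dsB)) = Vt"
proof -
  let ?B = "{(0::nat, 1::nat, j) | j. j < a2}"
  let ?T = "{(0::nat, 0::nat, j) | j. j < a2}"
  let ?X = "{(0::nat, r, j) | r j. a2 \<le> j \<and> j < a1 + a2 \<and> r < height 0 j}"
  let ?Y1 = "{(1::nat, r, j) | r j. g3 \<le> j \<and> j < g1 + g2 + g3 \<and> r < height 1 j}"
  let ?Y3 = "{(1::nat, r, j) | r j. j < g3 \<and> r < height 1 j}"
  let ?Z = "{(2::nat, r, j) | r j. 1 \<le> j \<and> j < w2 \<and> r < height 2 j}"
  have sr: "set (concat (map trip restB)) = ?Z \<union> ?Y1 \<union> ?Y3"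
    unfolding restB_def by auto
  have dr: "distinct (concat (map trip restB))"
  proof -
    have d1: "distinct (concat (map trip (map (DR 2) [1..<w2])))" "distinct (concat (map trip (map (DR 1) [g3..<g1 + g2 + g3])))"
      "distinct (concat (map trip (map (DR 1) [0..<g3])))" by (simp_all only: distinct_trip_DR distinct_upt)
    have i1: "?Z \<inter> (?Y1 \<union> ?Y3) = {}" "?Y1 \<inter> ?Y3 = {}" by auto
    have s1: "set (concat (map trip (map (DR 2) [1..<w2]))) = ?Z" by (simp only: set_trip_DR) auto
    have s2: "set (concat (map trip (map (DR 1) [g3..<g1 + g2 + g3]))) = ?Y1" by (simp only: set_trip_DR) auto
    have s3: "set (concat (map trip (map (DR 1) [0..<g3]))) = ?Y3" by (simp only: set_trip_DR) auto
    show ?thesis unfolding restB_def map_append concat_append distinct_append set_append s1 s2 s3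
      using d1 i1 by (simp only: simp_thms)

  qed
  have e: "concat (map trip dsB) = concat (map trip (map (DP 0 1) [0..<a2])) @ [(2, 1, 0)]
        @ concat (map trip (map (DP 0 0) [0..<a2])) @ concat (map trip (map (DR 0) [a2..<a1 + a2]))
        @ [(2, 0, 0)] @ concat (map trip restB)"
    unfolding dsB_def by simp
  have sB: "set (concat (map trip (map (DP 0 1) [0..<a2]))) = ?B" by (simp only: set_trip_DP) auto
  have sT: "set (concat (map trip (map (DP 0 0) [0..<a2]))) = ?T" by (simp only: set_trip_DP) auto
  have sX: "set (concat (map trip (map (DR 0) [a2..<a1 + a2]))) = ?X" by (simp only: set_trip_DR) auto
  have d1: "distinct (concat (map trip (map (DP 0 1) [0..<a2])))" "distinct (concat (map trip (map (DP 0 0) [0..<a2])))"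
    "distinct (concat (map trip (map (DR 0) [a2..<a1 + a2])))"
    by (simp_all only: distinct_trip_DP distinct_trip_DR distinct_upt)
  have dB: "distinct (concat (map trip dsB))"
  proof -
    have i: "?B \<inter> ({(2, 1, 0)} \<union> (?T \<union> (?X \<union> ({(2, 0, 0)} \<union> (?Z \<union> ?Y1 \<union> ?Y3))))) = {}"
      "{(2, 1, 0)} \<inter> (?T \<union> (?X \<union> ({(2, 0, 0)} \<union> (?Z \<union> ?Y1 \<union> ?Y3)))) = {}"
      "?T \<inter> (?X \<union> ({(2, 0, 0)} \<union> (?Z \<union> ?Y1 \<union> ?Y3))) = {}"
      "?X \<inter> ({(2, 0, 0)} \<union> (?Z \<union> ?Y1 \<union> ?Y3)) = {}"
      "{(2, 0, 0)} \<inter> (?Z \<union> ?Y1 \<union> ?Y3) = {}"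
      by auto
    show ?thesis unfolding e distinct_append set_append sB sT sX sr
      using d1 dr i by (simp only: distinct_singleton list.set simp_thms Un_assoc)
  qed
  have sA: "set (concat (map trip dsB)) = ?B \<union> {(2, 1, 0)} \<union> ?T \<union> ?X \<union> {(2, 0, 0)} \<union> (?Z \<union> ?Y1 \<union> ?Y3)"
    unfolding e set_append sB sT sX sr by (simp only: list.set Un_assoc)
  have eqV: "?B \<union> {(2, 1, 0)} \<union> ?T \<union> ?X \<union> {(2, 0, 0)} \<union> (?Z \<union> ?Y1 \<union> ?Y3) = Vt"
  proof
    have h20: "height 2 0 = 2" using w w2 unfolding height_def by auto
    have v1: "?B \<subseteq> Vt" "?T \<subseteq> Vt" "?X \<subseteq> Vt" "?Y1 \<subseteq> Vt" "?Y3 \<subseteq> Vt" "?Z \<subseteq> Vt"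
      unfolding Vt_def valid_def by (auto simp: height_def)
    have v2: "(2, 0, 0) \<in> Vt" "(2, 1, 0) \<in> Vt" using h20 unfolding Vt_def valid_def by auto
    show "?B \<union> {(2, 1, 0)} \<union> ?T \<union> ?X \<union> {(2, 0, 0)} \<union> (?Z \<union> ?Y1 \<union> ?Y3) \<subseteq> Vt"
      using v1 v2 by (simp only: Un_subset_iff insert_subset empty_subsetI simp_thms)
    show "Vt \<subseteq> ?B \<union> {(2, 1, 0)} \<union> ?T \<union> ?X \<union> {(2, 0, 0)} \<union> (?Z \<union> ?Y1 \<union> ?Y3)"
    proof
      fix t assume "t \<in> Vt"
      then obtain b r j where t: "t = (b, r, j)" "b < 3" "r < height b j" unfolding Vt_def valid_def by auto
      have "b = 0 \<or> b = 1 \<or> b = 2" using t by auto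
      then show "t \<in> ?B \<union> {(2, 1, 0)} \<union> ?T \<union> ?X \<union> {(2, 0, 0)} \<union> (?Z \<union> ?Y1 \<union> ?Y3)"
      proof (elim disjE)
        assume b: "b = 0"
        show ?thesis
        proof (cases "j < a2")
          case True
          then have "r < 2" using t b unfolding height_def by simp
          then have "r = 0 \<or> r = 1" by auto
          then show ?thesis using t b True by auto
        next
          case False
          have "j < a1 + a2" using t b False unfolding height_def by (simp split: if_splits)
          then show ?thesis using t b False by auto
        qed
      next
        assume b: "b = 1"
        have "j < g1 + g2 + g3" using t b unfolding height_def by (simp split: if_splits)
        then show ?thesis using t b by auto
      next
        assume b: "b = 2"
        have j: "j < w2" "r < 2" using t b w unfolding height_def by (simp_all split: if_splits)
        show ?thesis
        proof (cases "j = 0")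
          case True
          then show ?thesis using t b j by auto
        next
          case False
          then show ?thesis using t b j by auto
        qed
      qed
    qed
  qed
  show ?thesis by (intro conjI dB) (simp only: sA eqV)
qed

lemma final_kill:
  fixes M P :: "'a::field_char_0 mat3"
  assumes u: "u = 1 \<or> u = 2" and M: "kills M u"
  shows "kills (mmul mone (mmul (W mD mE00 k M) P)) u"
proof -
  let ?M' = "if k = 0 then M else mmul M mE00"
  have M': "kills ?M' u" using M kills_mmul by auto
  have r: "\<forall>l. W mD mE00 k M u l = ?M' u l" using W_row[where 'a='a, OF u] by (cases "k = 0") auto
  have "kills (mmul ?M' P) u" using kills_mmul[OF M'] .
  then have k: "kills (mmul (W mD mE00 k M) P) u"
    unfolding kills_def using mmul_row_eq[of "W mD mE00 k M" u ?M' P, OF r] by simp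
  moreover have "sends (mone :: 'a mat3) u u" using u sends_mone[where 'a='a] by auto
  ultimately show ?thesis using sends_kills_mmul by blast
qed

lemma restB_sends:
  assumes w: "w1 = 0"
  shows "\<exists>t. sends (prodi (s0::nat \<Rightarrow> 'a::field_char_0 mat3) id (map (collapse s0 \<circ> mk) restB)) 1 t"
proof -
  let ?c = "collapse (s0::nat \<Rightarrow> 'a mat3) \<circ> mk"
  let ?l1 = "map ?c (map (DR 2) [1..<w2])"
  let ?l2 = "map ?c (map (DR 1) [g3..<g1 + g2 + g3])"
  let ?l3 = "map ?c (map (DR 1) [0..<g3])"
  let ?t = "if even (length ?l2) then 1 else 3 - 1 :: nat"
  have e: "map ?c restB = ?l1 @ ?l2 @ ?l3" unfolding restB_def by simp
  have s1: "sends (prodi s0 id ?l1) 1 1"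
    by (rule sends_fix_list) (use St_col2z[where 'a='a] sends_concrete[where 'a='a] in3_comm in3_concrete in3_St[of "s0::nat \<Rightarrow> 'a mat3"] in3_s0[where 'a='a] in auto)
  have s2: "sends (prodi s0 id ?l2) 1 ?t"
  proof -
    have f: "\<forall>it\<in>set ?l2. \<exists>A. it = IM A \<and> in3 A \<and> sends A 1 2 \<and> sends A 2 1"
      using flip_col[where 'a='a] in3_St[of "s0::nat \<Rightarrow> 'a mat3"] in3_s0[where 'a='a] by auto
    show ?thesis using sends_flip_list[OF f, of 1] by simp
  qed
  have tt: "?t = 1 \<or> ?t = 2" by auto
  have s3: "sends (prodi s0 id ?l3) ?t ?t"
  proof (rule sends_fix_list)
    show "?t < 3" using tt by auto
    show "\<forall>it\<in>set ?l3. \<exists>A. it = IM A \<and> in3 A \<and> sends A ?t ?t"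
    proof
      fix it assume "it \<in> set ?l3"
      then obtain j where j: "j < g3" "it = IM (St s0 (colks 1 j))" by auto
      then have "St (s0::nat \<Rightarrow> 'a mat3) (colks 1 j) = st3 mJ mH mE12" using St_col3[where 'a='a] by simp
      then show "\<exists>A. it = IM A \<and> in3 A \<and> sends A ?t ?t"
        using j tt sends_concrete[where 'a='a] in3_st3[of "mJ::'a mat3" mH mE12] in3_concrete by auto
    qed
  qed
  have m: "mats ?l2" "mats ?l3" "mats (?l2 @ ?l3)"
    using mats_DR[of 1 "[g3..<g1 + g2 + g3]"] mats_DR[of 1 "[0..<g3]"] by (auto simp: mats_append)
  have "sends (prodi s0 id (?l2 @ ?l3)) 1 ?t"
    using sends_prodi_append[OF in3_prodi_mats[OF m(2)] s2 s3] .
  then have "sends (prodi s0 id (?l1 @ ?l2 @ ?l3)) 1 ?t"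
    using sends_prodi_append[OF in3_prodi_mats[OF m(3)] s1] by blast
  then show ?thesis unfolding e by blast
qed

lemma caseB_val:
  assumes w: "w1 = 0" and w2: "1 \<le> w2"
  shows "\<exists>u t. sends (val colL (s0::nat \<Rightarrow> 'a::field_char_0 mat3) {..<nn} (map IV (concat (map tvars (map mk dsB))))) u t"
proof -
  let ?toks = "map mk dsB"
  let ?N = "{..<nn}"
  let ?z0 = "idx 2 0 0" and ?z1 = "idx 2 1 0"
  let ?E = "map (collapse (s0::nat \<Rightarrow> 'a mat3) \<circ> mk) (map (DR 0) [a2..<a1 + a2])"
  let ?R = "map (collapse (s0::nat \<Rightarrow> 'a mat3) \<circ> mk) restB"
  have vz: "valid 2 0 0" "valid 2 1 0" using w w2 unfolding valid_def height_def by auto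
  have z01: "?z0 \<noteq> ?z1" using idx_inj[OF vz(1) vz(2)] by auto
  have dt: "distinct (concat (map trip dsB))" "set (concat (map trip dsB)) = Vt"
    using dsB_trip[OF w w2] by simp_all
  have p: "distinct (concat (map tvars ?toks))" "set (concat (map tvars ?toks)) = ?N"
    using ws_perm[OF dt] by simp_all
  have v1: "val colL (s0::nat \<Rightarrow> 'a mat3) ?N ([] @ concat (map expand ?toks))
      = val colL s0 (?N - set (concat (map rvars ?toks))) ([] @ map (collapse s0) ?toks)"
  proof (rule val_toks)
    show "finite ?N" by simp
    show "distinct (concat (map tvars ?toks))" by (rule p(1))
    show "\<forall>x\<in>set (concat (map tvars ?toks)). IV x \<notin> set []" by simp
    show "\<forall>ks. Run ks \<in> set ?toks \<longrightarrow> ks \<noteq> [] \<and> set ks = {x \<in> ?N. colL x = colL (hd ks)}"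
      by (rule runs_ok[OF dsB_dok[OF w]])
    show "\<forall>x. in3 ((s0::nat \<Rightarrow> 'a mat3) x)" using in3_s0 by blast
  qed
  have U': "?N - set (concat (map rvars ?toks)) = set bots \<union> set tops \<union> {?z0, ?z1}"
  proof -
    have "?N - set (concat (map rvars ?toks)) = {x. Pc x \<in> set ?toks}"
      using pieces_set[OF p(1)] p(2) by simp
    also have "\<dots> = set bots \<union> set tops \<union> {?z0, ?z1}"
      using restB_DR unfolding dsB_def bots_def tops_def by force
    finally show ?thesis .
  qed
  have c: "map (collapse (s0::nat \<Rightarrow> 'a mat3)) ?toks = map IV bots @ [IV ?z1] @ map IV tops @ ?E @ [IV ?z0] @ ?R"
    unfolding dsB_def bots_def tops_def by simp
  have mE: "mats ?E" by (rule mats_DR)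
  have mR: "mats ?R" using mats_DRs restB_DR by blast
  have zb: "?z0 \<notin> set bots \<union> set tops" "?z1 \<notin> set bots \<union> set tops"
    unfolding bots_def tops_def idx_def by auto
  have colz: "colL ?z0 = (2, 0)" "colL ?z1 = (2, 0)" using colL_idx vz by auto
  have colbt: "\<forall>x\<in>set bots \<union> set tops. fst (colL x) = 0"
  proof
    fix x assume "x \<in> set bots \<union> set tops"
    then consider j where "j < a2" "x = idx 0 1 j" | j where "j < a2" "x = idx 0 0 j"
      unfolding bots_def tops_def by auto
    then show "fst (colL x) = 0"
    proof cases
      case 1
      then have "valid 0 1 j" unfolding valid_def height_def by auto
      then show ?thesis using 1 colL_idx by auto
    next
      case 2
      then have "valid 0 0 j" unfolding valid_def height_def by auto
      then show ?thesis using 2 colL_idx by auto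
    qed
  qed
  have fibz: "{?z0, ?z1} = {x \<in> set bots \<union> set tops \<union> {?z0, ?z1}. colL x = (2, 0)}"
    using colz colbt by force
  have sz: "(s0::nat \<Rightarrow> 'a mat3) ?z0 = ma" "(s0::nat \<Rightarrow> 'a mat3) ?z1 = mb"
    using s0_idx[where 'a='a, OF vz(1)] s0_idx[where 'a='a, OF vz(2)] by (simp_all add: RM_def)
  let ?items = "map IV bots @ [IV ?z1] @ map IV tops @ ?E @ [IV ?z0] @ ?R"
  have nb: "\<forall>x. IV x \<in> set (map IV bots @ map IV tops) \<longrightarrow> x \<notin> {?z0, ?z1}" using zb by auto
  have nm: "\<forall>x. IV x \<in> set (?E @ ?R) \<longrightarrow> x \<notin> {?z0, ?z1}" using mE mR unfolding mats_def by auto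
  have sub1: "map (substi (s0::nat \<Rightarrow> 'a mat3) id {?z0, ?z1}) ?items = [] @ map IV bots @ [IM mb] @ map IV tops @ (?E @ [IM ma] @ ?R)"
    using map_substi_id[of "map IV bots" "{?z0, ?z1}" "s0::nat \<Rightarrow> 'a mat3" id]
      map_substi_id[of "map IV tops" "{?z0, ?z1}" "s0::nat \<Rightarrow> 'a mat3" id]
      map_substi_id[of "?E" "{?z0, ?z1}" "s0::nat \<Rightarrow> 'a mat3" id]
      map_substi_id[of "?R" "{?z0, ?z1}" "s0::nat \<Rightarrow> 'a mat3" id] nb nm sz by simp (use zb in auto)
  have sub2: "map (substi (s0::nat \<Rightarrow> 'a mat3) (transpose ?z0 ?z1) {?z0, ?z1}) ?items = [] @ map IV bots @ [IM ma] @ map IV tops @ (?E @ [IM mb] @ ?R)"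
    using map_substi_id[of "map IV bots" "{?z0, ?z1}" "s0::nat \<Rightarrow> 'a mat3" "transpose ?z0 ?z1"]
      map_substi_id[of "map IV tops" "{?z0, ?z1}" "s0::nat \<Rightarrow> 'a mat3" "transpose ?z0 ?z1"]
      map_substi_id[of "?E" "{?z0, ?z1}" "s0::nat \<Rightarrow> 'a mat3" "transpose ?z0 ?z1"]
      map_substi_id[of "?R" "{?z0, ?z1}" "s0::nat \<Rightarrow> 'a mat3" "transpose ?z0 ?z1"] nb nm sz z01 by simp (use zb in auto)
  have U3: "set bots \<union> set tops \<union> {?z0, ?z1} - {?z0, ?z1} = set bots \<union> set tops" using zb by auto
  have wrap: "\<And>X Y. in3 X \<Longrightarrow> in3 Y \<Longrightarrow> val colL (s0::nat \<Rightarrow> 'a mat3) (set bots \<union> set tops) ([] @ map IV bots @ [IM X] @ map IV tops @ (?E @ [IM Y] @ ?R))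
     = mmul (prodi s0 id []) (mmul (W mD mE00 (length bots) (prodi s0 id [IM X])) (prodi s0 id (?E @ [IM Y] @ ?R)))"
  proof -
    fix X Y :: "'a mat3" assume X: "in3 X" and Y: "in3 Y"
    show "val colL (s0::nat \<Rightarrow> 'a mat3) (set bots \<union> set tops) ([] @ map IV bots @ [IM X] @ map IV tops @ (?E @ [IM Y] @ ?R))
     = mmul (prodi s0 id []) (mmul (W mD mE00 (length bots) (prodi s0 id [IM X])) (prodi s0 id (?E @ [IM Y] @ ?R)))"
    proof (rule val_wrap)
      show "length bots = length tops" "distinct (bots @ tops)" using bots_tops_basic by simp_all
      show "set bots \<union> set tops = set bots \<union> set tops" by simp
      show "\<forall>i<length bots. {x \<in> set bots \<union> set tops. colL x = colL (bots ! i)} = {bots ! i, tops ! i}"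
        by (rule wrap_fiber)
      show "\<forall>x\<in>set bots. (s0::nat \<Rightarrow> 'a mat3) x = mD" by (rule s0_bots)
      show "\<forall>x\<in>set tops. (s0::nat \<Rightarrow> 'a mat3) x = mE00" by (rule s0_tops)
      show "in3 (mD::'a mat3)" "in3 (mE00::'a mat3)" by (simp_all add: in3_concrete)
      show "mats ([]::'a item list)" unfolding mats_def by simp
      show "mats [IM X]" using X unfolding mats_def by simp
      show "mats (?E @ [IM Y] @ ?R)" using mE mR Y unfolding mats_def by auto
    qed
  qed
  have a3: "in3 (ma :: 'a mat3)" "in3 (mb :: 'a mat3)" by (simp_all add: in3_concrete)
  let ?T1 = "mmul (prodi (s0::nat \<Rightarrow> 'a mat3) id []) (mmul (W mD mE00 (length bots) (prodi s0 id [IM mb])) (prodi s0 id (?E @ [IM ma] @ ?R)))"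
  let ?T2 = "mmul (prodi (s0::nat \<Rightarrow> 'a mat3) id []) (mmul (W mD mE00 (length bots) (prodi s0 id [IM ma])) (prodi s0 id (?E @ [IM mb] @ ?R)))"
  have tot: "val colL (s0::nat \<Rightarrow> 'a mat3) ?N (map IV (concat (map tvars ?toks))) = (\<lambda>i j. ?T1 i j - ?T2 i j)"
  proof -
    have "val colL (s0::nat \<Rightarrow> 'a mat3) ?N (map IV (concat (map tvars ?toks)))
        = val colL s0 ?N ([] @ concat (map expand ?toks))" by (simp only: map_IV_ws)
    also have "\<dots> = val colL s0 (?N - set (concat (map rvars ?toks))) ([] @ map (collapse s0) ?toks)" by (rule v1)
    also have "\<dots> = val colL s0 (set bots \<union> set tops \<union> {?z0, ?z1}) ?items"
      by (simp only: U' c append_Nil)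
    also have "\<dots> = (\<lambda>i j. val colL s0 (set bots \<union> set tops \<union> {?z0, ?z1} - {?z0, ?z1}) (map (substi s0 id {?z0, ?z1}) ?items) i j
         - val colL s0 (set bots \<union> set tops \<union> {?z0, ?z1} - {?z0, ?z1}) (map (substi s0 (transpose ?z0 ?z1) {?z0, ?z1}) ?items) i j)"
      by (rule val_pair[OF _ fibz z01]) simp
    also have "\<dots> = (\<lambda>i j. ?T1 i j - ?T2 i j)"
      unfolding U3 sub1 sub2 wrap[OF a3(2) a3(1)] wrap[OF a3(1) a3(2)] by simp
    finally show ?thesis .
  qed
  obtain t where t: "sends (prodi (s0::nat \<Rightarrow> 'a mat3) id ?R) 1 t" using restB_sends[OF w] by blast
  have P1: "sends (prodi (s0::nat \<Rightarrow> 'a mat3) id (?E @ [IM ma] @ ?R)) 0 t"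
  proof -
    have sE: "sends (prodi (s0::nat \<Rightarrow> 'a mat3) id ?E) 0 0"
      by (rule sends_fix_list) (use St_col1x[where 'a='a] sends_concrete[where 'a='a] in3_concrete in3_St[of "s0::nat \<Rightarrow> 'a mat3"] in3_s0[where 'a='a] in auto)
    have sa: "sends (prodi (s0::nat \<Rightarrow> 'a mat3) id [IM ma]) 0 1"
      using sends_concrete[where 'a='a] a3 by (simp add: mmul_mone_right)
    have m1: "mats ([IM ma] @ ?R)" using mR a3 unfolding mats_def by auto
    have "sends (prodi (s0::nat \<Rightarrow> 'a mat3) id ([IM ma] @ ?R)) 0 t"
      using sends_prodi_append[OF in3_prodi_mats[OF mR] sa t] .
    then show ?thesis using sends_prodi_append[OF in3_prodi_mats[OF m1] sE] by simp
  qed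
  have M1: "sends (prodi (s0::nat \<Rightarrow> 'a mat3) id [IM mb]) 1 0"
    using sends_concrete[where 'a='a] a3 by (simp add: mmul_mone_right)
  have K2: "kills (prodi (s0::nat \<Rightarrow> 'a mat3) id [IM ma]) 1"
    using sends_concrete[where 'a='a] a3 by (simp add: mmul_mone_right)
  have "sends ?T1 1 t" using final_row[of 1, OF _ M1 P1] by simp
  moreover have "kills ?T2 1" using final_kill[of 1, OF _ K2] by simp
  ultimately have "sends (\<lambda>i j. ?T1 i j - ?T2 i j) 1 t" by (rule sends_diff)
  then show ?thesis unfolding tot by blast
qed

lemma RM_part: "(RM b r :: 'a::comm_ring_1 mat3) \<in> mpart b"
  unfolding RM_def using part_facts[where 'a='a] by auto

lemma adm_s0: "adm LL (s0 :: nat \<Rightarrow> 'a::comm_ring_1 mat3)"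
  unfolding adm_def vtype_def s0_def using RM_part[where 'a='a] fst_cell by metis

lemma exists_ws:
  assumes h2: "w1 + w2 \<noteq> 0"
    and h3: "w1 \<le> 2 \<or> (3 \<le> w1 \<and> \<lceil>real w1 / 2\<rceil> - 1 \<le> int (g1 + g2))"
  shows "\<exists>ws. distinct ws \<and> set ws = {..<nn} \<and>
           (\<exists>u t. sends (val colL (s0::nat \<Rightarrow> 'a::field_char_0 mat3) {..<nn} (map IV ws)) u t)"
proof (cases "w1 = 0")
  case True
  then have w2: "1 \<le> w2" using h2 by simp
  have dt: "distinct (concat (map trip dsB))" "set (concat (map trip dsB)) = Vt"
    using dsB_trip[OF True w2] by simp_all
  show ?thesis using ws_perm[OF dt] caseB_val[OF True w2] by blast
next
  case False
  then have hw: "1 \<le> w1" by simp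
  have he: "eA \<le> g1 + g2"
  proof (cases "w1 \<le> 2")
    case True
    then show ?thesis unfolding eA_def by auto
  next
    case False
    then have "\<lceil>real w1 / 2\<rceil> - 1 \<le> int (g1 + g2)" using h3 by simp
    then have "int ((w1 + 1) div 2) - 1 \<le> int (g1 + g2)" by (simp add: ceil_half)
    then show ?thesis unfolding eA_def using False by linarith
  qed
  have dt: "distinct (concat (map trip dsA))" "set (concat (map trip dsA)) = Vt"
    using dsA_trip[OF hw he] by simp_all
  show ?thesis using ws_perm[OF dt] caseA_val[OF hw he] by blast
qed

lemma colgrp_CG: "colgrp LL = CG colL {..<nn}"
  unfolding colgrp_def CG_def colL_def totaln_LL by auto

lemma main_ctx:
  assumes h2: "w1 + w2 \<noteq> 0"
    and h3: "w1 \<le> 2 \<or> (3 \<le> w1 \<and> \<lceil>real w1 / 2\<rceil> - 1 \<le> int (g1 + g2))"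
  shows "mult_star LL TYPE('a::field_char_0) \<noteq> 0"
proof -
  obtain ws u t where ws: "distinct ws" "set ws = {..<nn}"
    and st: "sends (val colL (s0::nat \<Rightarrow> 'a mat3) {..<nn} (map IV ws)) u t"
    using exists_ws[OF h2 h3] by blast
  have len: "length ws = nn" using distinct_card[OF ws(1)] ws(2) by simp
  define sg where "sg = (\<lambda>k. if k < nn then ws ! k else k)"
  have sgp: "sg permutes {..<nn}"
  proof (rule bij_imp_permutes)
    have "inj_on sg {..<nn}"
      unfolding sg_def inj_on_def using ws(1) len nth_eq_iff_index_eq by fastforce
    moreover have "sg ` {..<nn} = {..<nn}"
    proof -
      have "sg ` {..<nn} = (\<lambda>k. ws ! k) ` {..<length ws}" unfolding sg_def len by auto
      also have "\<dots> = set ws" by (auto simp: in_set_conv_nth)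
      finally show ?thesis using ws(2) by simp
    qed
    ultimately show "bij_betw sg {..<nn} {..<nn}" unfolding bij_betw_def by simp
    show "\<And>x. x \<notin> {..<nn} \<Longrightarrow> sg x = x" unfolding sg_def by simp
  qed
  have msg: "map sg [0..<nn] = ws"
    by (rule nth_equalityI) (simp_all add: len sg_def)
  have mono: "\<And>q. monoval nn (s0::nat \<Rightarrow> 'a mat3) (q \<circ> sg) = prodi s0 q (map IV ws)"
  proof -
    fix q
    show "monoval nn (s0::nat \<Rightarrow> 'a mat3) (q \<circ> sg) = prodi s0 q (map IV ws)"
      unfolding monoval_def prodi_def msg[symmetric] by (simp add: foldr_map comp_def)
  qed
  have rowc: "\<forall>p\<in>rowgrp LL. \<forall>x<totaln LL. (s0::nat \<Rightarrow> 'a mat3) (p x) = s0 x"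
    unfolding rowgrp_def s0_def by auto
  let ?c0 = "\<lambda>\<sigma>::nat\<Rightarrow>nat. if \<sigma> = sg then 1 else (0::'a)"
  have ev: "evalp nn (ysym LL ?c0) (s0::nat \<Rightarrow> 'a mat3) u t
      = of_nat (card (rowgrp LL)) * val colL s0 {..<nn} (map IV ws) u t"
    using evalp_delta[of sg LL "s0::nat \<Rightarrow> 'a mat3" u t] sgp rowc
    unfolding totaln_LL val_def colgrp_CG mono by simp
  have fR: "finite (rowgrp LL)" using finite_permutations[of "{..<totaln LL}"] unfolding rowgrp_def
    by (rule finite_subset[rotated]) auto
  have idR: "id \<in> rowgrp LL" unfolding rowgrp_def by (simp add: permutes_id)
  have cR: "card (rowgrp LL) \<noteq> 0" using fR idR by auto
  have nz: "evalp nn (ysym LL ?c0) (s0::nat \<Rightarrow> 'a mat3) u t \<noteq> 0"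
    unfolding ev using cR sends_nz[OF st] by simp
  let ?v0 = "evf LL (ysym LL ?c0)"
  have v0: "?v0 (s0::nat \<Rightarrow> 'a mat3) u t \<noteq> 0"
    using nz adm_s0[where 'a='a] unfolding evf_def totaln_LL by simp
  then have v0nz: "?v0 \<noteq> 0" by auto
  interpret V: vector_space "scl :: 'a \<Rightarrow> ((nat \<Rightarrow> 'a mat3) \<Rightarrow> 'a mat3) \<Rightarrow> _" by (rule vs_scl)
  let ?Vs = "{evf LL (ysym LL c) | c :: (nat \<Rightarrow> nat) \<Rightarrow> 'a. c \<in> Pml (totaln LL)}"
  let ?P = "{\<sigma>. \<sigma> permutes {..<totaln LL}}"
  let ?W = "(\<lambda>\<sigma>. evf LL (ysym LL (\<lambda>\<rho>. if \<rho> = \<sigma> then (1::'a) else 0))) ` ?P"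
  have fW: "finite ?W" using finite_permutations by blast
  have VW: "?Vs \<subseteq> V.span ?W"
  proof
    fix v assume "v \<in> ?Vs"
    then obtain c where c: "c \<in> Pml (totaln LL)" "v = evf LL (ysym LL c)" by auto
    show "v \<in> V.span ?W" unfolding c(2) evf_lin[OF c(1)]
      by (intro V.span_sum V.span_scale V.span_base) auto
  qed
  have c0P: "?c0 \<in> Pml (totaln LL)" unfolding Pml_def totaln_LL using sgp by auto
  have v0V: "?v0 \<in> ?Vs" using c0P by blast
  obtain B where B: "B \<subseteq> ?Vs" "V.independent B" "?Vs \<subseteq> V.span B" "card B = V.dim ?Vs"
    by (rule V.basis_exists)
  have fB: "finite B" using V.independent_span_bound[OF fW B(2)] B(1) VW by blast
  have "B \<noteq> {}"
  proof
    assume "B = {}"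
    then have "?v0 \<in> V.span {}" using B(3) v0V by blast
    then show False using v0nz by simp
  qed
  then have "card B \<noteq> 0" using fB by simp
  then show ?thesis unfolding mult_star_def B(4) by simp
qed

end

theorem proposition5p8:
  fixes \<alpha>1 \<alpha>2 \<gamma>1 \<gamma>2 \<gamma>3 w1 w2 :: nat
  assumes "[\<gamma>1 + \<gamma>2 + \<gamma>3, \<gamma>2 + \<gamma>3, \<gamma>3] \<noteq> [0, 0, 0]"
      and "[w1 + w2, w2] \<noteq> [0, 0]"
      and "w1 \<le> 2 \<or> (3 \<le> w1 \<and> \<lceil>real w1 / 2\<rceil> - 1 \<le> int (\<gamma>1 + \<gamma>2))"
  shows "mult_star [[\<alpha>1 + \<alpha>2, \<alpha>2], [\<gamma>1 + \<gamma>2 + \<gamma>3, \<gamma>2 + \<gamma>3, \<gamma>3], [w1 + w2, w2], []]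
           TYPE('a::field_char_0) \<noteq> 0"
proof -
  have h2: "w1 + w2 \<noteq> 0" using assms(2) by auto
  have "mult_star (LL \<alpha>1 \<alpha>2 \<gamma>1 \<gamma>2 \<gamma>3 w1 w2) TYPE('a) \<noteq> 0"
    by (rule main_ctx[OF h2 assms(3)])
  then show ?thesis by (simp add: LL_def)
qed

end
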